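(* With probability $1/2$, the sublinear perceptron returns a solution $\bar{x}$ that is an $\varepsilon$-approximation.
   Context: The sublinear perceptron is the following algorithm. Input: $\varepsilon>0$ and a matrix $A \in \mathbb{R}^{n \times d}$ whose rows $A_i$ all lie in the Euclidean unit ball $\mathbb{B}\subset\mathbb{R}^d$. Set $T \gets 200^2 \varepsilon^{-2}\log n$, $y_1 \gets 0$, $w_1 \gets \mathbf{1}_n$ (the all-ones $n$-vector), $\eta\gets \frac{1}{100} \sqrt{\frac{\log n}{T}}$. For $t=1,\dots,T$: let $p_t \gets w_t/\|w_t\|_1$ and $x_t \gets y_t/\max\{1,\|y_t\|\}$; choose $i_t\in[n]$ with probability $p_t(i)$; set $y_{t+1} \gets y_t + \frac{1}{\sqrt{2T}} A_{i_t}$; choose $j_t\in[d]$ with probability $x_t(j)^2/\|x_t\|^2$; for each $i\in[n]$ set $\tilde v_t(i) \gets A_i(j_t)\|x_t\|^2/x_t(j_t)$, $v_t(i) \gets \mathrm{clip}(\tilde v_t(i), 1/\eta)$ where $\mathrm{clip}(z,V)=\min\{V,\max\{-V,z\}\}$, and $w_{t+1}(i) \gets w_t(i)(1-\eta v_t(i)+\eta^2 v_t(i)^2)$. Return $\bar{x} = \frac{1}{T}\sum_t x_t$. A vector $x_\varepsilon\in\mathbb{B}$ is an $\varepsilon$-approximate solution if for all $i'$, $A_{i'} x_\varepsilon \geq \max_{x\in\mathbb{B}} \min_i A_i x - \varepsilon$. *)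

theory Defs
  imports "HOL-Probability.Probability"
begin

text \<open>Rows of A are indexed by the finite type 'n (so n = CARD('n)),
columns by the finite type 'd (so d = CARD('d)).\<close>

definition clip :: "real \<Rightarrow> real \<Rightarrow> real" where
  "clip z V = min V (max (- V) z)"

definition perc_T :: "real \<Rightarrow> nat \<Rightarrow> nat" where
  "perc_T \<epsilon> n = nat \<lceil>200^2 * \<epsilon> powr (-2) * ln (real n)\<rceil>"

definition perc_eta :: "real \<Rightarrow> nat \<Rightarrow> real" where
  "perc_eta \<epsilon> n = (1/100) * sqrt (ln (real n) / real (perc_T \<epsilon> n))"

definition row_dist :: "('n::finite \<Rightarrow> real) \<Rightarrow> 'n pmf" where
  "row_dist w = embed_pmf (\<lambda>i. w i / (\<Sum>k\<in>UNIV. \<bar>w k\<bar>))"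

text \<open>Distribution of the coordinate j with probability x(j)^2/||x||^2
 (when x = 0 this distribution is undefined in the paper; we then pick j uniformly,
 which is immaterial since the resulting estimate is 0/0 = 0).\<close>
definition col_dist :: "real^'d::finite \<Rightarrow> 'd pmf" where
  "col_dist x = (if x = 0 then pmf_of_set UNIV
                 else embed_pmf (\<lambda>j. (x $ j)^2 / (norm x)^2))"

text \<open>State: (y_t, w_t, sum of x_1..x_{t-1}).\<close>
type_synonym ('d, 'n) perc_state = "(real^'d) \<times> ('n \<Rightarrow> real) \<times> (real^'d)"

definition perc_step ::
  "real^'d::finite^'n::finite \<Rightarrow> real \<Rightarrow> nat \<Rightarrow> ('d,'n) perc_state \<Rightarrow> ('d,'n) perc_state pmf" where
  "perc_step A \<eta> T st =
     (let y = fst st; w = fst (snd st); s = snd (snd st);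
          x = (1 / max 1 (norm y)) *\<^sub>R y
      in bind_pmf (row_dist w) (\<lambda>i.
         bind_pmf (col_dist x) (\<lambda>j.
           (let v = (\<lambda>k. clip (A $ k $ j * (norm x)^2 / x $ j) (1 / \<eta>))
            in return_pmf (y + (1 / sqrt (2 * real T)) *\<^sub>R (A $ i),
                    (\<lambda>k. w k * (1 - \<eta> * v k + \<eta>^2 * (v k)^2)),
                    s + x)))))"

definition sublinear_perceptron :: "real \<Rightarrow> real^'d::finite^'n::finite \<Rightarrow> (real^'d) pmf" where
  "sublinear_perceptron \<epsilon> A =
     (let n = CARD('n); T = perc_T \<epsilon> n; \<eta> = perc_eta \<epsilon> n;
          init = return_pmf (0, (\<lambda>_. 1), 0)
      in map_pmf (\<lambda>st. (1 / real T) *\<^sub>R snd (snd st))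
           (((\<lambda>p. bind_pmf p (perc_step A \<eta> T)) ^^ T) init))"

definition perc_value :: "real^'d::finite^'n::finite \<Rightarrow> real" where
  "perc_value A = (SUP x\<in>cball 0 1. Min (range (\<lambda>i. A $ i \<bullet> x)))"

definition eps_approx_solution :: "real \<Rightarrow> real^'d::finite^'n::finite \<Rightarrow> real^'d \<Rightarrow> bool" where
  "eps_approx_solution \<epsilon> A x \<longleftrightarrow>
     x \<in> cball 0 1 \<and> (\<forall>i. A $ i \<bullet> x \<ge> perc_value A - \<epsilon>)"

end

theory Submission
  imports Defs
begin

lemma exp_le_quad_neg:
  fixes z :: real assumes "z \<le> 0" shows "exp z \<le> 1 + z + z\<^sup>2"
proof -
  have e: "1 - z \<le> exp (-z)" using exp_ge_add_one_self[of "-z"] by simp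
  have "exp z * (1 - z) \<le> exp z * exp (-z)" using e by (intro mult_left_mono) auto
  also have "\<dots> = 1" by (simp add: exp_minus)
  also have "1 \<le> (1 + z + z\<^sup>2) * (1 - z)"
  proof -
    have "(1 + z + z\<^sup>2) * (1 - z) = 1 - z^3" by (simp add: algebra_simps power2_eq_square power3_eq_cube)
    moreover have "z^3 \<le> 0" using assms mult_nonneg_nonpos[of "z*z" z] by (simp add: power3_eq_cube)
    ultimately show ?thesis by simp
  qed
  finally have "exp z * (1 - z) \<le> (1 + z + z\<^sup>2) * (1 - z)" .
  moreover have "0 < 1 - z" using assms by simp
  ultimately show ?thesis by simp
qed

lemma exp_71_bound: "exp (71/10::real) \<le> 1230"
proof -
  have "exp (71/10::real) = exp 1 ^ 7 * exp (1/10)"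
    by (simp add: exp_add[symmetric] exp_of_nat_mult[symmetric])
  also have "\<dots> \<le> (272/100) ^ 7 * (111/100)"
  proof (intro mult_mono power_mono)
    show "exp 1 \<le> (272/100::real)" using e_less_272 by simp
    show "exp (1/10) \<le> (111/100::real)" using exp_bound[of "1/10"] by (simp add: power2_eq_square)
  qed auto
  also have "\<dots> \<le> 1230" by (simp add: power_divide)
  finally show ?thesis .
qed

lemma exp_le_quad:
  fixes z :: real assumes "z \<le> 71/10" shows "exp z \<le> 1 + z + 25 * z\<^sup>2"
proof (cases "z \<le> 0")
  case True
  then show ?thesis using exp_le_quad_neg[of z] by (smt (verit) zero_le_power2)
next
  case False
  define K :: real where "K = 71/10"
  have z0: "0 \<le> z" using False by simp
  have s1: "summable (\<lambda>n. inverse (fact (n + 2)) * z ^ (n + 2))"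
    using summable_exp[of z, THEN summable_ignore_initial_segment, of 2] by simp
  have s2: "summable (\<lambda>n. inverse (fact (n + 2)) * K ^ (n + 2))"
    using summable_exp[of K, THEN summable_ignore_initial_segment, of 2] by simp
  have "(\<Sum>n. inverse (fact (n + 2)) * z ^ (n + 2)) \<le> (\<Sum>n. (z\<^sup>2 / K\<^sup>2) * (inverse (fact (n + 2)) * K ^ (n + 2)))"
  proof (intro suminf_le allI)
    fix n
    have Kp: "K > 0" by (simp add: K_def)
    have "z ^ n \<le> K ^ n" using z0 assms by (intro power_mono) (auto simp: K_def)
    then have "z\<^sup>2 * z ^ n \<le> z\<^sup>2 * K ^ n" by (intro mult_left_mono) auto
    moreover have "z ^ (n+2) = z\<^sup>2 * z ^ n" by (simp add: power_add mult.commute power2_eq_square)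
    moreover have "(z\<^sup>2 / K\<^sup>2) * K ^ (n + 2) = z\<^sup>2 * K ^ n" using Kp by (simp add: power_add power2_eq_square)
    ultimately have zz: "z ^ (n+2) \<le> (z\<^sup>2 / K\<^sup>2) * K ^ (n + 2)" by linarith
    show "inverse (fact (n + 2)) * z ^ (n + 2) \<le> (z\<^sup>2 / K\<^sup>2) * (inverse (fact (n + 2)) * K ^ (n + 2))"
      using mult_left_mono[OF zz, of "inverse (fact (n + 2))"] by (simp only: mult.left_commute) simp
    show "summable (\<lambda>n. inverse (fact (n + 2)) * z ^ (n + 2))" by (rule s1)
    show "summable (\<lambda>n. (z\<^sup>2 / K\<^sup>2) * (inverse (fact (n + 2)) * K ^ (n + 2)))"
      by (rule summable_mult[OF s2])
  qed
  also have "\<dots> = (z\<^sup>2 / K\<^sup>2) * (\<Sum>n. inverse (fact (n + 2)) * K ^ (n + 2))"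
    by (rule suminf_mult[OF s2])
  also have "(\<Sum>n. inverse (fact (n + 2)) * K ^ (n + 2)) = exp K - 1 - K"
    using exp_first_two_terms[of K] by simp
  also have "(z\<^sup>2 / K\<^sup>2) * (exp K - 1 - K) \<le> (z\<^sup>2 / K\<^sup>2) * (25 * K\<^sup>2)"
    using exp_71_bound by (intro mult_left_mono) (auto simp: K_def power2_eq_square)
  also have "\<dots> = 25 * z\<^sup>2" by (simp add: K_def)
  finally show ?thesis using exp_first_two_terms[of z] by simp
qed

lemma exp_neg_le_quad:
  fixes z :: real assumes "\<bar>z\<bar> \<le> 1" shows "exp (- z) \<le> 1 - z + z\<^sup>2"
proof (cases "z \<le> 0")
  case True then show ?thesis using exp_bound[of "-z"] assms by simp
next
  case False then show ?thesis using exp_le_quad_neg[of "-z"] by simp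
qed

lemma chain_inv:
  assumes "\<And>z. z \<in> set_pmf pI \<Longrightarrow> I 0 z"
    and "\<And>k z z'. k < N \<Longrightarrow> I k z \<Longrightarrow> z' \<in> set_pmf (K z) \<Longrightarrow> I (Suc k) z'"
  shows "k \<le> N \<Longrightarrow> z \<in> set_pmf (((\<lambda>p. bind_pmf p K) ^^ k) pI) \<Longrightarrow> I k z"
proof (induction k arbitrary: z)
  case 0 then show ?case using assms(1) by simp
next
  case (Suc k)
  then obtain z0 where "z0 \<in> set_pmf (((\<lambda>p. bind_pmf p K) ^^ k) pI)" "z \<in> set_pmf (K z0)" by auto
  then show ?case using Suc assms(2)[of k z0 z] by simp
qed

lemma chain_super:
  assumes "\<And>z. z \<in> set_pmf pI \<Longrightarrow> I 0 z"
    and "\<And>k z z'. k < N \<Longrightarrow> I k z \<Longrightarrow> z' \<in> set_pmf (K z) \<Longrightarrow> I (Suc k) z'"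
    and "\<And>k z. k < N \<Longrightarrow> I k z \<Longrightarrow> (\<integral>\<^sup>+z'. \<Psi> z' \<partial>K z) \<le> \<Psi> z"
  shows "k \<le> N \<Longrightarrow> (\<integral>\<^sup>+z. \<Psi> z \<partial>(((\<lambda>p. bind_pmf p K) ^^ k) pI)) \<le> (\<integral>\<^sup>+z. \<Psi> z \<partial>pI)"
proof (induction k)
  case 0 then show ?case by simp
next
  case (Suc k)
  have "(\<integral>\<^sup>+z. \<Psi> z \<partial>(((\<lambda>p. bind_pmf p K) ^^ Suc k) pI))
      = (\<integral>\<^sup>+z. (\<integral>\<^sup>+z'. \<Psi> z' \<partial>K z) \<partial>(((\<lambda>p. bind_pmf p K) ^^ k) pI))" by simp
  also have "\<dots> \<le> (\<integral>\<^sup>+z. \<Psi> z \<partial>(((\<lambda>p. bind_pmf p K) ^^ k) pI))"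
  proof (rule nn_integral_mono_AE)
    show "AE z in measure_pmf (((\<lambda>p. bind_pmf p K) ^^ k) pI). (\<integral>\<^sup>+z'. \<Psi> z' \<partial>K z) \<le> \<Psi> z"
      unfolding AE_measure_pmf_iff
      using chain_inv[of pI I N K k] assms Suc.prems by (auto intro!: assms(3))
  qed
  also have "\<dots> \<le> (\<integral>\<^sup>+z. \<Psi> z \<partial>pI)" using Suc by simp
  finally show ?case .
qed

lemma chain_map:
  assumes "\<And>z. map_pmf f (K' z) = K (f z)"
  shows "map_pmf f (((\<lambda>p. bind_pmf p K') ^^ k) p) = ((\<lambda>p. bind_pmf p K) ^^ k) (map_pmf f p)"
proof (induction k)
  case 0 then show ?case by simp
next
  case (Suc k)
  show ?case by (simp add: map_bind_pmf assms bind_map_pmf[symmetric] Suc)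
qed

lemma nn_integral_pmf_finite_type:
  "(\<integral>\<^sup>+x. f x \<partial>measure_pmf (p::'a::finite pmf)) = (\<Sum>x\<in>UNIV. ennreal (pmf p x) * f x)"
  by (simp add: nn_integral_measure_pmf nn_integral_count_space_finite)

lemma pmf_row_dist:
  fixes w :: "'n::finite \<Rightarrow> real"
  assumes "\<And>i. 0 < w i"
  shows "pmf (row_dist w) i = w i / (\<Sum>k\<in>UNIV. w k)"
proof -
  have W: "0 < (\<Sum>k\<in>UNIV. w k)" using assms by (intro sum_pos) auto
  have ab: "(\<Sum>k\<in>UNIV. \<bar>w k\<bar>) = (\<Sum>k\<in>UNIV. w k)" using assms by (intro sum.cong) (auto intro: abs_of_pos)
  have nn: "\<And>i. 0 \<le> w i / (\<Sum>k\<in>UNIV. \<bar>w k\<bar>)" using assms W ab by (simp add: less_imp_le)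
  have "(\<integral>\<^sup>+x. ennreal (w x / (\<Sum>k\<in>UNIV. \<bar>w k\<bar>)) \<partial>count_space UNIV) = ennreal (\<Sum>x\<in>UNIV. w x / (\<Sum>k\<in>UNIV. \<bar>w k\<bar>))"
    using nn by (simp add: nn_integral_count_space_finite sum_ennreal)
  also have "(\<Sum>x\<in>UNIV. w x / (\<Sum>k\<in>UNIV. \<bar>w k\<bar>)) = 1" using W ab by (simp add: sum_divide_distrib[symmetric])
  finally have pr: "(\<integral>\<^sup>+x. ennreal (w x / (\<Sum>k\<in>UNIV. \<bar>w k\<bar>)) \<partial>count_space UNIV) = 1" by simp
  show ?thesis unfolding row_dist_def using pmf_embed_pmf[OF nn pr] ab by simp
qed

lemma norm_sq_vec: "(norm (x::real^'d::finite))\<^sup>2 = (\<Sum>j\<in>UNIV. (x$j)\<^sup>2)"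
  unfolding power2_norm_eq_inner inner_vec_def by (simp add: power2_eq_square)

lemma pmf_col_dist:
  fixes x :: "real^'d::finite"
  assumes "x \<noteq> 0"
  shows "pmf (col_dist x) j = (x$j)\<^sup>2 / (norm x)\<^sup>2"
proof -
  have N: "0 < (norm x)\<^sup>2" using assms by simp
  have nn: "\<And>j. 0 \<le> (x$j)\<^sup>2 / (norm x)\<^sup>2" by simp
  have "(\<integral>\<^sup>+j. ennreal ((x$j)\<^sup>2 / (norm x)\<^sup>2) \<partial>count_space UNIV) = ennreal (\<Sum>j\<in>UNIV. (x$j)\<^sup>2 / (norm x)\<^sup>2)"
    using nn by (simp add: nn_integral_count_space_finite sum_ennreal)
  also have "(\<Sum>j\<in>UNIV. (x$j)\<^sup>2 / (norm x)\<^sup>2) = 1" using N by (simp add: sum_divide_distrib[symmetric] norm_sq_vec[symmetric])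
  finally have pr: "(\<integral>\<^sup>+j. ennreal ((x$j)\<^sup>2 / (norm x)\<^sup>2) \<partial>count_space UNIV) = 1" by simp
  show ?thesis unfolding col_dist_def using pmf_embed_pmf[OF nn pr] assms by simp
qed

lemma pmf_col_dist0: "pmf (col_dist (0::real^'d::finite)) j = 1 / real CARD('d)"
  unfolding col_dist_def by simp

lemma clip_abs: "0 \<le> V \<Longrightarrow> \<bar>clip z V\<bar> \<le> V"
  unfolding clip_def by auto

lemma clip_sq: "0 \<le> V \<Longrightarrow> (clip z V)\<^sup>2 \<le> z\<^sup>2"
  unfolding clip_def by (auto simp: abs_le_square_iff[symmetric] min_def max_def)

lemma clip_err: assumes "0 < V" shows "\<bar>clip z V - z\<bar> \<le> z\<^sup>2 / V"
proof (cases "\<bar>z\<bar> \<le> V")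
  case True then show ?thesis unfolding clip_def by (auto simp: min_def max_def)
next
  case False
  then have "\<bar>clip z V - z\<bar> \<le> \<bar>z\<bar>" unfolding clip_def using assms by (auto simp: min_def max_def)
  also have "\<bar>z\<bar> = \<bar>z\<bar> * V / V" using assms by simp
  also have "\<dots> \<le> \<bar>z\<bar> * \<bar>z\<bar> / V" using False assms by (intro divide_right_mono mult_left_mono) auto
  finally show ?thesis by (simp add: power2_eq_square abs_mult_self_eq)
qed

definition vt :: "real^'d::finite^'n::finite \<Rightarrow> real^'d \<Rightarrow> 'd \<Rightarrow> 'n \<Rightarrow> real" where
  "vt A x j k = A $ k $ j * (norm x)^2 / x $ j"

lemma col_mean:
  fixes A :: "real^'d::finite^'n::finite"
  shows "(\<Sum>j\<in>UNIV. pmf (col_dist x) j * vt A x j k) = A $ k \<bullet> x"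
proof (cases "x = 0")
  case True then show ?thesis by (simp add: vt_def)
next
  case False
  have "\<And>j. pmf (col_dist x) j * vt A x j k = A $ k $ j * x $ j"
    using False by (auto simp: pmf_col_dist vt_def power2_eq_square)
  then show ?thesis by (simp add: inner_vec_def)
qed

lemma col_sq:
  fixes A :: "real^'d::finite^'n::finite"
  assumes "norm x \<le> 1" "norm (A $ k) \<le> 1"
  shows "(\<Sum>j\<in>UNIV. pmf (col_dist x) j * (vt A x j k)\<^sup>2) \<le> 1"
proof (cases "x = 0")
  case True then show ?thesis by (simp add: vt_def)
next
  case False
  have "\<And>j. pmf (col_dist x) j * (vt A x j k)\<^sup>2 \<le> (A $ k $ j)\<^sup>2 * (norm x)\<^sup>2"
    using False by (auto simp: pmf_col_dist vt_def power2_eq_square)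
  then have "(\<Sum>j\<in>UNIV. pmf (col_dist x) j * (vt A x j k)\<^sup>2) \<le> (\<Sum>j\<in>UNIV. (A $ k $ j)\<^sup>2 * (norm x)\<^sup>2)"
    by (intro sum_mono)
  also have "\<dots> = (norm (A $ k))\<^sup>2 * (norm x)\<^sup>2" by (simp add: norm_sq_vec sum_distrib_right)
  also have "\<dots> \<le> 1 * 1" using assms by (intro mult_mono power_le_one) auto
  finally show ?thesis by simp
qed

lemma col_sum1: "(\<Sum>j\<in>UNIV. pmf (col_dist x) j) = 1"
  using sum_pmf_eq_1[of UNIV "col_dist x"] by simp

lemma exp_moment:
  fixes q :: "'a \<Rightarrow> real" and X :: "'a \<Rightarrow> real"
  assumes "finite S" "\<And>s. s \<in> S \<Longrightarrow> 0 \<le> q s" "(\<Sum>s\<in>S. q s) = 1"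
    "\<And>s. s \<in> S \<Longrightarrow> l * X s \<le> 71/10" "(\<Sum>s\<in>S. q s * X s) \<le> b" "(\<Sum>s\<in>S. q s * (X s)\<^sup>2) \<le> 4" "0 \<le> l"
  shows "(\<Sum>s\<in>S. q s * exp (l * X s)) \<le> exp (l * b + 100 * l\<^sup>2)"
proof -
  have "(\<Sum>s\<in>S. q s * exp (l * X s)) \<le> (\<Sum>s\<in>S. q s * (1 + l * X s + 25 * (l * X s)\<^sup>2))"
    using assms by (intro sum_mono mult_left_mono exp_le_quad) auto
  also have "\<dots> = (\<Sum>s\<in>S. q s) + l * (\<Sum>s\<in>S. q s * X s) + 25 * l\<^sup>2 * (\<Sum>s\<in>S. q s * (X s)\<^sup>2)"
    by (simp add: algebra_simps sum.distrib sum_distrib_left power_mult_distrib)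
  also have "\<dots> \<le> 1 + l * b + 25 * l\<^sup>2 * 4"
    using assms by (intro add_mono mult_left_mono) auto
  also have "\<dots> \<le> exp (l * b + 100 * l\<^sup>2)" using exp_ge_add_one_self[of "l * b + 100 * l\<^sup>2"] by linarith
  finally show ?thesis .
qed

definition xof :: "real^'d::finite \<Rightarrow> real^'d" where
  "xof y = (1 / max 1 (norm y)) *\<^sub>R y"

lemma norm_xof: "norm (xof y) \<le> 1"
  unfolding xof_def by (auto simp: max_def field_simps)

definition vv :: "real^'d::finite^'n::finite \<Rightarrow> real \<Rightarrow> real^'d \<Rightarrow> 'd \<Rightarrow> 'n \<Rightarrow> real" where
  "vv A \<eta> x j k = clip (vt A x j k) (1/\<eta>)"

definition pp :: "('n::finite \<Rightarrow> real) \<Rightarrow> 'n \<Rightarrow> real" where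
  "pp w k = w k / (\<Sum>k\<in>UNIV. \<bar>w k\<bar>)"

lemma pp_row: "(\<And>i. 0 < w i) \<Longrightarrow> pp w i = pmf (row_dist w) i"
  using pmf_row_dist[of w i] unfolding pp_def
  by (metis (no_types, lifting) abs_of_pos sum.cong)

lemma pp_sum1: "(\<And>i. 0 < w i) \<Longrightarrow> (\<Sum>i\<in>UNIV. pp w i) = 1"
  using sum_pmf_eq_1[of UNIV "row_dist w"] pp_row[of w] by simp

lemma pp_nn: "0 \<le> w i \<Longrightarrow> 0 \<le> pp w i"
  unfolding pp_def by (auto intro!: divide_nonneg_nonneg sum_nonneg)

lemma col_nn: "0 \<le> pmf (col_dist x) j" by simp

lemma vv_abs: "0 < \<eta> \<Longrightarrow> \<bar>vv A \<eta> x j k\<bar> \<le> 1/\<eta>"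
  unfolding vv_def by (intro clip_abs) simp

lemma vv_sq:
  assumes "0 < \<eta>" "norm x \<le> 1" "norm (A $ k) \<le> 1"
  shows "(\<Sum>j\<in>UNIV. pmf (col_dist x) j * (vv A \<eta> x j k)\<^sup>2) \<le> 1"
proof -
  have "(\<Sum>j\<in>UNIV. pmf (col_dist x) j * (vv A \<eta> x j k)\<^sup>2) \<le> (\<Sum>j\<in>UNIV. pmf (col_dist x) j * (vt A x j k)\<^sup>2)"
    unfolding vv_def using assms by (intro sum_mono mult_left_mono clip_sq) auto
  also have "\<dots> \<le> 1" using col_sq assms by blast
  finally show ?thesis .
qed

lemma vv_mean:
  assumes "0 < \<eta>" "norm x \<le> 1" "norm (A $ k) \<le> 1"
  shows "\<bar>(\<Sum>j\<in>UNIV. pmf (col_dist x) j * vv A \<eta> x j k) - A $ k \<bullet> x\<bar> \<le> \<eta>"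
proof -
  have "(\<Sum>j\<in>UNIV. pmf (col_dist x) j * vv A \<eta> x j k) - A $ k \<bullet> x
      = (\<Sum>j\<in>UNIV. pmf (col_dist x) j * (vv A \<eta> x j k - vt A x j k))"
    using col_mean[of x A k] by (simp add: sum_subtractf right_diff_distrib)
  also have "\<bar>\<dots>\<bar> \<le> (\<Sum>j\<in>UNIV. \<bar>pmf (col_dist x) j * (vv A \<eta> x j k - vt A x j k)\<bar>)"
    by (rule sum_abs)
  also have "\<dots> \<le> (\<Sum>j\<in>UNIV. pmf (col_dist x) j * ((vt A x j k)\<^sup>2 * \<eta>))"
  proof (intro sum_mono)
    fix j
    have "\<bar>vv A \<eta> x j k - vt A x j k\<bar> \<le> (vt A x j k)\<^sup>2 / (1/\<eta>)"
      unfolding vv_def using assms by (intro clip_err) simp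
    then show "\<bar>pmf (col_dist x) j * (vv A \<eta> x j k - vt A x j k)\<bar> \<le> pmf (col_dist x) j * ((vt A x j k)\<^sup>2 * \<eta>)"
      by (simp add: abs_mult mult_left_mono)
  qed
  also have "\<dots> = \<eta> * (\<Sum>j\<in>UNIV. pmf (col_dist x) j * (vt A x j k)\<^sup>2)"
    by (simp add: sum_distrib_left algebra_simps)
  also have "\<dots> \<le> \<eta> * 1" using col_sq[of x A k] assms by (intro mult_left_mono) auto
  finally show ?thesis by simp
qed

lemma inner_row_abs:
  assumes "norm x \<le> 1" "norm (A $ k) \<le> 1"
  shows "\<bar>A $ k \<bullet> x\<bar> \<le> 1"
proof -
  have "\<bar>A $ k \<bullet> x\<bar> \<le> norm (A $ k) * norm x" by (rule Cauchy_Schwarz_ineq2)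
  also have "\<dots> \<le> 1 * 1" using assms by (intro mult_mono) auto
  finally show ?thesis by simp
qed

lemma jensen_sq:
  fixes p v :: "'a \<Rightarrow> real"
  assumes "finite S" "\<And>s. s \<in> S \<Longrightarrow> 0 \<le> p s" "(\<Sum>s\<in>S. p s) = 1"
  shows "(\<Sum>s\<in>S. p s * v s)\<^sup>2 \<le> (\<Sum>s\<in>S. p s * (v s)\<^sup>2)"
proof -
  define m where "m = (\<Sum>s\<in>S. p s * v s)"
  have "0 \<le> (\<Sum>s\<in>S. p s * (v s - m)\<^sup>2)" using assms by (intro sum_nonneg) auto
  also have "\<dots> = (\<Sum>s\<in>S. p s * (v s)\<^sup>2) - 2 * m * (\<Sum>s\<in>S. p s * v s) + m\<^sup>2 * (\<Sum>s\<in>S. p s)"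
    by (simp add: power2_diff algebra_simps sum.distrib sum_subtractf sum_distrib_left sum_distrib_right)
  finally show ?thesis using assms(3) by (simp add: m_def power2_eq_square)
qed

lemma dsum_cart:
  fixes p :: "'a \<Rightarrow> real" and q :: "'b \<Rightarrow> real"
  shows "(\<Sum>i\<in>I. p i * (\<Sum>j\<in>J. q j * f i j)) = (\<Sum>z\<in>I \<times> J. p (fst z) * q (snd z) * f (fst z) (snd z))"
  by (simp add: sum.cartesian_product sum_distrib_left mult.assoc case_prod_beta)

lemma exp_moment2:
  fixes p :: "'a \<Rightarrow> real" and q :: "'b \<Rightarrow> real"
  assumes "finite I" "finite J" "\<And>i. i \<in> I \<Longrightarrow> 0 \<le> p i" "\<And>j. j \<in> J \<Longrightarrow> 0 \<le> q j"
    "(\<Sum>i\<in>I. p i) = 1" "(\<Sum>j\<in>J. q j) = 1"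
    "\<And>i j. i \<in> I \<Longrightarrow> j \<in> J \<Longrightarrow> l * X i j \<le> 71/10"
    "(\<Sum>i\<in>I. p i * (\<Sum>j\<in>J. q j * X i j)) \<le> b"
    "(\<Sum>i\<in>I. p i * (\<Sum>j\<in>J. q j * (X i j)\<^sup>2)) \<le> 4" "0 \<le> l"
  shows "(\<Sum>i\<in>I. p i * (\<Sum>j\<in>J. q j * exp (l * X i j))) \<le> exp (l * b + 100 * l\<^sup>2)"
proof -
  have s1: "(\<Sum>z\<in>I \<times> J. p (fst z) * q (snd z)) = 1"
    using dsum_cart[where p=p and I=I and q=q and J=J and f="\<lambda>_ _. 1"] assms(5,6) by simp
  show ?thesis
    unfolding dsum_cart
    apply (rule exp_moment[where q = "\<lambda>z. p (fst z) * q (snd z)" and X = "\<lambda>z. X (fst z) (snd z)"])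
    using assms s1 dsum_cart[where p=p and I=I and q=q and J=J and f=X] dsum_cart[where p=p and I=I and q=q and J=J and f="\<lambda>i j. (X i j)\<^sup>2"]
    by (auto simp: mem_Times_iff)
qed

lemma step_E1:
  assumes "0 < \<eta>" "\<eta> \<le> 1/70" "norm x \<le> 1" "norm (A $ k) \<le> 1"
  shows "(\<Sum>j\<in>UNIV. pmf (col_dist x) j * exp (7*\<eta> * (vv A \<eta> x j k - A$k \<bullet> x)))
           \<le> exp (7*\<eta> * \<eta> + 100 * (7*\<eta>)\<^sup>2)"
proof (rule exp_moment)
  define \<mu> where "\<mu> = A$k \<bullet> x"
  have mu: "\<bar>\<mu>\<bar> \<le> 1" unfolding \<mu>_def using inner_row_abs assms by blast
  show "(\<Sum>j\<in>UNIV. pmf (col_dist x) j) = 1" by (rule col_sum1)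
  show "7*\<eta> * (vv A \<eta> x j k - A$k \<bullet> x) \<le> 71/10" for j
  proof -
    have "vv A \<eta> x j k - \<mu> \<le> 1/\<eta> + 1" using vv_abs[OF assms(1), of A x j k] mu by linarith
    then have "7*\<eta> * (vv A \<eta> x j k - \<mu>) \<le> 7*\<eta> * (1/\<eta> + 1)" using assms by (intro mult_left_mono) auto
    also have "\<dots> = 7 + 7*\<eta>" using assms by (simp add: field_simps)
    also have "\<dots> \<le> 71/10" using assms by simp
    finally show ?thesis by (simp add: \<mu>_def)
  qed
  have m: "\<bar>(\<Sum>j\<in>UNIV. pmf (col_dist x) j * vv A \<eta> x j k) - \<mu>\<bar> \<le> \<eta>"
    unfolding \<mu>_def using vv_mean assms by blast
  have "(\<Sum>j\<in>UNIV. pmf (col_dist x) j * (vv A \<eta> x j k - \<mu>)) = (\<Sum>j\<in>UNIV. pmf (col_dist x) j * vv A \<eta> x j k) - \<mu>"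
    using col_sum1[of x] by (simp add: right_diff_distrib sum_subtractf sum_distrib_right[symmetric])
  then show "(\<Sum>j\<in>UNIV. pmf (col_dist x) j * (vv A \<eta> x j k - A$k \<bullet> x)) \<le> \<eta>"
    using m by (simp add: \<mu>_def)
  have "(\<Sum>j\<in>UNIV. pmf (col_dist x) j * (vv A \<eta> x j k - \<mu>)\<^sup>2) \<le> (\<Sum>j\<in>UNIV. pmf (col_dist x) j * (2 * (vv A \<eta> x j k)\<^sup>2 + 2 * \<mu>\<^sup>2))"
  proof (intro sum_mono mult_left_mono)
    fix j show "(vv A \<eta> x j k - \<mu>)\<^sup>2 \<le> 2 * (vv A \<eta> x j k)\<^sup>2 + 2 * \<mu>\<^sup>2"
      by (smt (verit) power2_diff zero_le_power2 power2_sum)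
  qed simp
  also have "\<dots> = 2 * (\<Sum>j\<in>UNIV. pmf (col_dist x) j * (vv A \<eta> x j k)\<^sup>2) + 2 * \<mu>\<^sup>2 * (\<Sum>j\<in>UNIV. pmf (col_dist x) j)"
    by (simp add: distrib_left sum.distrib sum_distrib_left sum_distrib_right mult_ac)
  also have "\<dots> = 2 * (\<Sum>j\<in>UNIV. pmf (col_dist x) j * (vv A \<eta> x j k)\<^sup>2) + 2 * \<mu>\<^sup>2"
    using col_sum1[of x] by simp
  also have "\<dots> \<le> 2 * 1 + 2 * 1"
    using vv_sq[OF assms(1,3,4)] mu by (intro add_mono mult_left_mono) (auto simp: abs_le_square_iff[symmetric] power_le_one_iff abs_square_le_1)
  finally show "(\<Sum>j\<in>UNIV. pmf (col_dist x) j * (vv A \<eta> x j k - A$k \<bullet> x)\<^sup>2) \<le> 4" by (simp add: \<mu>_def)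
qed (use assms in auto)

lemma wsum_swap:
  fixes p :: "'n::finite \<Rightarrow> real" and q :: "'d::finite \<Rightarrow> real"
  shows "(\<Sum>j\<in>UNIV. q j * (\<Sum>k\<in>UNIV. p k * f j k)) = (\<Sum>k\<in>UNIV. p k * (\<Sum>j\<in>UNIV. q j * f j k))"
proof -
  have "(\<Sum>j\<in>UNIV. q j * (\<Sum>k\<in>UNIV. p k * f j k)) = (\<Sum>j\<in>UNIV. \<Sum>k\<in>UNIV. q j * (p k * f j k))"
    by (simp add: sum_distrib_left)
  also have "\<dots> = (\<Sum>k\<in>UNIV. \<Sum>j\<in>UNIV. q j * (p k * f j k))" by (rule sum.swap)
  also have "\<dots> = (\<Sum>k\<in>UNIV. p k * (\<Sum>j\<in>UNIV. q j * f j k))"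
    by (simp add: sum_distrib_left mult.left_commute)
  finally show ?thesis .
qed

lemma wsum_D:
  assumes "0 < \<eta>" "norm x \<le> 1" "\<forall>k. norm (A $ k) \<le> 1" "\<And>i. 0 < w i"
  shows "(\<Sum>j\<in>UNIV. pmf (col_dist x) j * (\<Sum>k\<in>UNIV. pp w k * (vv A \<eta> x j k)\<^sup>2)) \<le> 1"
proof -
  have "(\<Sum>j\<in>UNIV. pmf (col_dist x) j * (\<Sum>k\<in>UNIV. pp w k * (vv A \<eta> x j k)\<^sup>2))
      = (\<Sum>k\<in>UNIV. pp w k * (\<Sum>j\<in>UNIV. pmf (col_dist x) j * (vv A \<eta> x j k)\<^sup>2))" by (rule wsum_swap)
  also have "\<dots> \<le> (\<Sum>k\<in>UNIV. pp w k * 1)"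
    using assms vv_sq pp_nn less_imp_le by (intro sum_mono mult_left_mono) blast+
  also have "\<dots> = 1" using pp_sum1[of w] assms(4) by auto
  finally show ?thesis .
qed

lemma step_E3:
  assumes "0 < \<eta>" "norm x \<le> 1" "\<forall>k. norm (A $ k) \<le> 1" "\<And>i. 0 < w i"
  shows "(\<Sum>i\<in>UNIV. pp w i * (\<Sum>j\<in>UNIV. pmf (col_dist x) j * (\<Sum>k\<in>UNIV. pp w k * (vv A \<eta> x j k)\<^sup>2))) \<le> 1"
proof -
  have "(\<Sum>i\<in>UNIV. pp w i * (\<Sum>j\<in>UNIV. pmf (col_dist x) j * (\<Sum>k\<in>UNIV. pp w k * (vv A \<eta> x j k)\<^sup>2)))
     = (\<Sum>i\<in>UNIV. pp w i) * (\<Sum>j\<in>UNIV. pmf (col_dist x) j * (\<Sum>k\<in>UNIV. pp w k * (vv A \<eta> x j k)\<^sup>2))"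
    by (simp add: sum_distrib_right)
  moreover have "(\<Sum>i\<in>UNIV. pp w i) = 1" using pp_sum1[of w] assms(4) by auto
  ultimately show ?thesis using wsum_D[OF assms] by simp
qed

lemma step_E2:
  fixes A :: "real^'d::finite^'n::finite"
  assumes "0 < \<eta>" "\<eta> \<le> 1/70" "norm x \<le> 1" "\<forall>k. norm (A $ k) \<le> 1" "\<And>i. 0 < w i"
  shows "(\<Sum>i\<in>UNIV. pp w i * (\<Sum>j\<in>UNIV. pmf (col_dist x) j *
            exp (7*\<eta> * (A$i \<bullet> x - (\<Sum>k\<in>UNIV. pp w k * vv A \<eta> x j k)))))
           \<le> exp (7*\<eta> * \<eta> + 100 * (7*\<eta>)\<^sup>2)"
proof (rule exp_moment2)
  define c where "c j = (\<Sum>k\<in>UNIV. pp w k * vv A \<eta> x j k)" for j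
  have p1: "(\<Sum>i\<in>UNIV. pp w i) = 1" using pp_sum1[of w] assms(5) by auto
  have pn: "\<And>i. 0 \<le> pp w i" using pp_nn assms less_imp_le by blast
  have q1: "(\<Sum>j\<in>UNIV. pmf (col_dist x) j) = 1" by (rule col_sum1)
  have cabs: "\<bar>c j\<bar> \<le> 1/\<eta>" for j
  proof -
    have "\<bar>c j\<bar> \<le> (\<Sum>k\<in>UNIV. \<bar>pp w k * vv A \<eta> x j k\<bar>)" unfolding c_def by (rule sum_abs)
    also have "\<dots> \<le> (\<Sum>k\<in>UNIV. pp w k * (1/\<eta>))"
    proof (intro sum_mono)
      fix k
      have "pp w k * \<bar>vv A \<eta> x j k\<bar> \<le> pp w k * (1/\<eta>)" using pn vv_abs[OF assms(1)] by (intro mult_left_mono) auto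
      then show "\<bar>pp w k * vv A \<eta> x j k\<bar> \<le> pp w k * (1/\<eta>)" using pn by (simp add: abs_mult)
    qed
    also have "\<dots> = 1/\<eta>" using p1 by (simp add: sum_divide_distrib[symmetric])
    finally show ?thesis .
  qed
  have ai: "\<bar>A$i \<bullet> x\<bar> \<le> 1" for i using inner_row_abs assms by blast
  show "(\<Sum>i\<in>UNIV. pp w i) = 1" by (rule p1)
  show "(\<Sum>j\<in>UNIV. pmf (col_dist x) j) = 1" by (rule q1)
  show "7*\<eta> * (A$i \<bullet> x - (\<Sum>k\<in>UNIV. pp w k * vv A \<eta> x j k)) \<le> 71/10" for i j
  proof -
    have "A$i \<bullet> x - c j \<le> 1 + 1/\<eta>" using ai[of i] cabs[of j] by linarith
    then have "7*\<eta> * (A$i \<bullet> x - c j) \<le> 7*\<eta> * (1 + 1/\<eta>)" using assms by (intro mult_left_mono) auto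
    also have "\<dots> = 7 + 7*\<eta>" using assms by (simp add: field_simps)
    also have "\<dots> \<le> 71/10" using assms by simp
    finally show ?thesis by (simp add: c_def)
  qed
  have "(\<Sum>i\<in>UNIV. pp w i * (\<Sum>j\<in>UNIV. pmf (col_dist x) j * (A$i \<bullet> x - c j)))
      = (\<Sum>i\<in>UNIV. pp w i * (A$i \<bullet> x)) - (\<Sum>j\<in>UNIV. pmf (col_dist x) j * c j)"
  proof -
    define C where "C = (\<Sum>j\<in>UNIV. pmf (col_dist x) j * c j)"
    have hq: "\<And>i. (\<Sum>j\<in>UNIV. pmf (col_dist x) j * (A$i \<bullet> x - c j)) = A$i \<bullet> x - C"
      using q1 unfolding C_def by (simp add: right_diff_distrib sum_subtractf sum_distrib_right[symmetric] del: sum_distrib_right)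
    have "(\<Sum>i\<in>UNIV. pp w i * (\<Sum>j\<in>UNIV. pmf (col_dist x) j * (A$i \<bullet> x - c j))) = (\<Sum>i\<in>UNIV. pp w i * (A$i \<bullet> x - C))"
      by (simp only: hq)
    also have "\<dots> = (\<Sum>i\<in>UNIV. pp w i * (A$i \<bullet> x)) - C * (\<Sum>i\<in>UNIV. pp w i)"
      by (simp add: right_diff_distrib sum_subtractf sum_distrib_left mult.commute)
    finally show ?thesis using p1 unfolding C_def by simp
  qed
  also have "(\<Sum>j\<in>UNIV. pmf (col_dist x) j * c j) = (\<Sum>k\<in>UNIV. pp w k * (\<Sum>j\<in>UNIV. pmf (col_dist x) j * vv A \<eta> x j k))"
    unfolding c_def by (rule wsum_swap)
  also have "(\<Sum>i\<in>UNIV. pp w i * (A$i \<bullet> x)) - \<dots> = (\<Sum>k\<in>UNIV. pp w k * (A$k \<bullet> x - (\<Sum>j\<in>UNIV. pmf (col_dist x) j * vv A \<eta> x j k)))"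
    by (simp add: right_diff_distrib sum_subtractf)
  also have "\<dots> \<le> (\<Sum>k\<in>UNIV. pp w k * \<eta>)"
    using pn vv_mean[OF assms(1,3)] assms(4) by (intro sum_mono mult_left_mono) (auto simp: abs_le_iff)
  also have "\<dots> = \<eta>" using p1 by (simp add: sum_distrib_right[symmetric] del: sum_distrib_right)
  finally show "(\<Sum>i\<in>UNIV. pp w i * (\<Sum>j\<in>UNIV. pmf (col_dist x) j * (A$i \<bullet> x - (\<Sum>k\<in>UNIV. pp w k * vv A \<eta> x j k)))) \<le> \<eta>"
    by (simp add: c_def)
  have "(\<Sum>i\<in>UNIV. pp w i * (\<Sum>j\<in>UNIV. pmf (col_dist x) j * (A$i \<bullet> x - c j)\<^sup>2))
      \<le> (\<Sum>i\<in>UNIV. pp w i * (\<Sum>j\<in>UNIV. pmf (col_dist x) j * (2 + 2 * (\<Sum>k\<in>UNIV. pp w k * (vv A \<eta> x j k)\<^sup>2))))"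
  proof (intro sum_mono mult_left_mono pn col_nn)
    fix i j
    have "(c j)\<^sup>2 \<le> (\<Sum>k\<in>UNIV. pp w k * (vv A \<eta> x j k)\<^sup>2)" unfolding c_def
      using jensen_sq[of UNIV "pp w" "\<lambda>k. vv A \<eta> x j k"] pn p1 by simp
    moreover have "(A$i \<bullet> x)\<^sup>2 \<le> 1" using ai[of i] by (simp add: abs_le_square_iff[symmetric] abs_square_le_1)
    moreover have "(A$i \<bullet> x - c j)\<^sup>2 \<le> 2 * (A$i \<bullet> x)\<^sup>2 + 2 * (c j)\<^sup>2"
      by (smt (verit) power2_diff zero_le_power2 power2_sum)
    ultimately show "(A$i \<bullet> x - c j)\<^sup>2 \<le> 2 + 2 * (\<Sum>k\<in>UNIV. pp w k * (vv A \<eta> x j k)\<^sup>2)" by linarith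
  qed
  also have "\<dots> = (\<Sum>i\<in>UNIV. pp w i) * (\<Sum>j\<in>UNIV. pmf (col_dist x) j * (2 + 2 * (\<Sum>k\<in>UNIV. pp w k * (vv A \<eta> x j k)\<^sup>2)))"
    by (simp only: sum_distrib_right)
  also have "(\<Sum>j\<in>UNIV. pmf (col_dist x) j * (2 + 2 * (\<Sum>k\<in>UNIV. pp w k * (vv A \<eta> x j k)\<^sup>2)))
     = 2 * (\<Sum>j\<in>UNIV. pmf (col_dist x) j) + 2 * (\<Sum>j\<in>UNIV. pmf (col_dist x) j * (\<Sum>k\<in>UNIV. pp w k * (vv A \<eta> x j k)\<^sup>2))"
    by (simp add: distrib_left sum.distrib sum_distrib_left mult_ac)
  also have "(\<Sum>i\<in>UNIV. pp w i) * (2 * (\<Sum>j\<in>UNIV. pmf (col_dist x) j) + 2 * (\<Sum>j\<in>UNIV. pmf (col_dist x) j * (\<Sum>k\<in>UNIV. pp w k * (vv A \<eta> x j k)\<^sup>2))) \<le> 1 * (2 * 1 + 2 * 1)"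
    using p1 q1 wsum_D[OF assms(1,3,4,5)] by simp
  finally show "(\<Sum>i\<in>UNIV. pp w i * (\<Sum>j\<in>UNIV. pmf (col_dist x) j * (A$i \<bullet> x - (\<Sum>k\<in>UNIV. pp w k * vv A \<eta> x j k))\<^sup>2)) \<le> 4"
    by (simp add: c_def)
qed (auto simp: assms(1) pp_nn assms(5) less_imp_le)

type_synonym ('d,'n) aug = "('d,'n) perc_state \<times> nat \<times> ('n \<Rightarrow> real) \<times> real \<times> real \<times> real"

definition upd :: "real^'d::finite^'n::finite \<Rightarrow> real \<Rightarrow> nat \<Rightarrow> ('d,'n) aug \<Rightarrow> 'n \<Rightarrow> 'd \<Rightarrow> ('d,'n) aug" where
  "upd A \<eta> T z i j = (case z of ((y,w,s),t,V,P,Q,G) \<Rightarrow>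
     ((y + (1 / sqrt (2 * real T)) *\<^sub>R (A $ i),
       (\<lambda>k. w k * (1 - \<eta> * vv A \<eta> (xof y) j k + \<eta>^2 * (vv A \<eta> (xof y) j k)^2)),
       s + xof y),
      Suc t, (\<lambda>k. V k + vv A \<eta> (xof y) j k),
      P + (\<Sum>k\<in>UNIV. pp w k * vv A \<eta> (xof y) j k),
      Q + (\<Sum>k\<in>UNIV. pp w k * (vv A \<eta> (xof y) j k)^2),
      G + A $ i \<bullet> xof y))"

definition aug_step :: "real^'d::finite^'n::finite \<Rightarrow> real \<Rightarrow> nat \<Rightarrow> ('d,'n) aug \<Rightarrow> ('d,'n) aug pmf" where
  "aug_step A \<eta> T z = bind_pmf (row_dist (fst (snd (fst z)))) (\<lambda>i.
      bind_pmf (col_dist (xof (fst (fst z)))) (\<lambda>j. return_pmf (upd A \<eta> T z i j)))"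

lemma aug_map: "map_pmf fst (aug_step A \<eta> T z) = perc_step A \<eta> T (fst z)"
proof -
  obtain y w s r where z: "z = ((y,w,s),r)" by (metis prod.exhaust)
  obtain t V P Q G where r: "r = (t,V,P,Q,G)" by (metis prod.exhaust)
  show ?thesis unfolding z r aug_step_def perc_step_def
    by (simp add: map_bind_pmf upd_def Let_def xof_def vv_def vt_def)
qed

lemma set_aug_step: "z' \<in> set_pmf (aug_step A \<eta> T z) \<Longrightarrow> \<exists>i j. z' = upd A \<eta> T z i j"
  unfolding aug_step_def by auto

lemma nn_aug_step:
  "(\<integral>\<^sup>+z'. f z' \<partial>aug_step A \<eta> T z) =
     (\<Sum>i\<in>UNIV. ennreal (pmf (row_dist (fst (snd (fst z)))) i) *
        (\<Sum>j\<in>UNIV. ennreal (pmf (col_dist (xof (fst (fst z)))) j) * f (upd A \<eta> T z i j)))"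
  unfolding aug_step_def by (simp add: nn_integral_pmf_finite_type)

definition aa :: "real \<Rightarrow> real" where "aa \<eta> = 7*\<eta>*\<eta> + 100*(7*\<eta>)\<^sup>2"

definition Psi :: "real^'d::finite^'n::finite \<Rightarrow> real \<Rightarrow> nat \<Rightarrow> ('d,'n) aug \<Rightarrow> real" where
  "Psi A \<eta> T z = (case z of ((y,w,s),t,V,P,Q,G) \<Rightarrow>
     (\<Sum>k\<in>UNIV. exp (7*\<eta>*(V k - A$k \<bullet> s) - aa \<eta> * real t))
     + real CARD('n) * exp (7*\<eta>*(G - P) - aa \<eta> * real t)
     + real CARD('n) / 10 * ((Q + real T - real t) / real T))"

lemma dd_add:
  fixes p :: "'a \<Rightarrow> real" and q :: "'b \<Rightarrow> real"
  shows "(\<Sum>i\<in>I. p i * (\<Sum>j\<in>J. q j * (f i j + g i j))) =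
         (\<Sum>i\<in>I. p i * (\<Sum>j\<in>J. q j * f i j)) + (\<Sum>i\<in>I. p i * (\<Sum>j\<in>J. q j * g i j))"
  by (simp add: distrib_left sum.distrib)

lemma dd_cmult:
  fixes p :: "'a \<Rightarrow> real" and q :: "'b \<Rightarrow> real"
  shows "(\<Sum>i\<in>I. p i * (\<Sum>j\<in>J. q j * (c * f i j))) = c * (\<Sum>i\<in>I. p i * (\<Sum>j\<in>J. q j * f i j))"
  by (simp add: sum_distrib_left mult_ac)

lemma dd_sumk:
  fixes p :: "'a \<Rightarrow> real" and q :: "'b \<Rightarrow> real"
  shows "(\<Sum>i\<in>I. p i * (\<Sum>j\<in>J. q j * (\<Sum>k\<in>K. f k i j))) = (\<Sum>k\<in>K. (\<Sum>i\<in>I. p i * (\<Sum>j\<in>J. q j * f k i j)))"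
proof -
  have "(\<Sum>i\<in>I. p i * (\<Sum>j\<in>J. q j * (\<Sum>k\<in>K. f k i j))) = (\<Sum>i\<in>I. \<Sum>j\<in>J. \<Sum>k\<in>K. p i * (q j * f k i j))"
    by (simp add: sum_distrib_left)
  also have "\<dots> = (\<Sum>i\<in>I. \<Sum>k\<in>K. \<Sum>j\<in>J. p i * (q j * f k i j))"
    by (rule sum.cong[OF refl], rule sum.swap)
  also have "\<dots> = (\<Sum>k\<in>K. \<Sum>i\<in>I. \<Sum>j\<in>J. p i * (q j * f k i j))" by (rule sum.swap)
  also have "\<dots> = (\<Sum>k\<in>K. (\<Sum>i\<in>I. p i * (\<Sum>j\<in>J. q j * f k i j)))"
    by (simp add: sum_distrib_left)
  finally show ?thesis .
qed

lemma dd_const: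
  fixes p :: "'a \<Rightarrow> real" and q :: "'b \<Rightarrow> real"
  assumes "(\<Sum>i\<in>I. p i) = 1" "(\<Sum>j\<in>J. q j) = 1"
  shows "(\<Sum>i\<in>I. p i * (\<Sum>j\<in>J. q j * c)) = c"
  using assms by (simp add: sum_distrib_right[symmetric])

lemma dd_onlyj:
  fixes p :: "'a \<Rightarrow> real" and q :: "'b \<Rightarrow> real"
  assumes "(\<Sum>i\<in>I. p i) = 1"
  shows "(\<Sum>i\<in>I. p i * (\<Sum>j\<in>J. q j * f j)) = (\<Sum>j\<in>J. q j * f j)"
  using assms by (simp add: sum_distrib_right[symmetric])

lemma Psi_step:
  fixes A :: "real^'d::finite^'n::finite"
  assumes eta: "0 < \<eta>" "\<eta> \<le> 1/70" and A: "\<forall>k. norm (A $ k) \<le> 1" and w: "\<forall>i. 0 < w i"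
    and t: "Suc t \<le> T" and Q: "0 \<le> Q"
  shows "(\<Sum>i\<in>UNIV. pp w i * (\<Sum>j\<in>UNIV. pmf (col_dist (xof y)) j *
            Psi A \<eta> T (upd A \<eta> T ((y,w,s),t,V,P,Q,G) i j)))
         \<le> Psi A \<eta> T ((y,w,s),t,V,P,Q,G)"
proof -
  define x where "x = xof y"
  have nx: "norm x \<le> 1" unfolding x_def by (rule norm_xof)
  define v where "v j k = vv A \<eta> x j k" for j k
  define p where "p = pp w"
  define q where "q = pmf (col_dist x)"
  define l where "l = 7*\<eta>"
  define a where "a = aa \<eta>"
  have p1: "(\<Sum>i\<in>UNIV. p i) = 1" unfolding p_def using pp_sum1[of w] w by auto
  have q1: "(\<Sum>j\<in>UNIV. q j) = 1" unfolding q_def by (rule col_sum1)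
  have T0: "0 < real T" using t by simp
  define E1 where "E1 (k::'n) (i::'n) (j::'d) = exp (l*(V k + v j k - A$k \<bullet> (s + x)) - a * real (Suc t))" for k i j
  define E2 where "E2 (i::'n) (j::'d) = real CARD('n) * exp (l*((G + A$i \<bullet> x) - (P + (\<Sum>k\<in>UNIV. p k * v j k))) - a * real (Suc t))" for i j
  define E3 where "E3 (i::'n) (j::'d) = real CARD('n) / 10 * ((Q + (\<Sum>k\<in>UNIV. p k * (v j k)^2) + real T - real (Suc t)) / real T)" for i j
  have eq: "Psi A \<eta> T (upd A \<eta> T ((y,w,s),t,V,P,Q,G) i j) = (\<Sum>k\<in>UNIV. E1 k i j) + E2 i j + E3 i j" for i j
    unfolding Psi_def upd_def E1_def E2_def E3_def v_def p_def x_def l_def a_def by simp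
  have part1: "(\<Sum>i\<in>UNIV. p i * (\<Sum>j\<in>UNIV. q j * E1 k i j)) \<le> exp (l*(V k - A$k \<bullet> s) - a * real t)" for k
  proof -
    have "E1 k i j = exp (l*(V k - A$k \<bullet> s) - a * real t) * exp (- a) * exp (l * (v j k - A$k \<bullet> x))" for i j
      unfolding E1_def by (simp add: exp_add[symmetric] inner_add_right algebra_simps)
    then have "(\<Sum>i\<in>UNIV. p i * (\<Sum>j\<in>UNIV. q j * E1 k i j))
        = exp (l*(V k - A$k \<bullet> s) - a * real t) * exp (- a) * (\<Sum>j\<in>UNIV. q j * exp (l * (v j k - A$k \<bullet> x)))"
      using dd_onlyj[OF p1, where q=q and J=UNIV and f="\<lambda>j. exp (l*(V k - A$k \<bullet> s) - a * real t) * exp (- a) * exp (l * (v j k - A$k \<bullet> x))"]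
      by (simp add: sum_distrib_left mult_ac)
    also have "\<dots> \<le> exp (l*(V k - A$k \<bullet> s) - a * real t) * exp (- a) * exp a"
      using step_E1[OF eta nx, of A k] A unfolding q_def v_def l_def a_def aa_def
      by (intro mult_left_mono) auto
    also have "\<dots> = exp (l*(V k - A$k \<bullet> s) - a * real t)" by (simp add: exp_minus field_simps)
    finally show ?thesis .
  qed
  have part2: "(\<Sum>i\<in>UNIV. p i * (\<Sum>j\<in>UNIV. q j * E2 i j)) \<le> real CARD('n) * exp (l*(G - P) - a * real t)"
  proof -
    have "E2 i j = real CARD('n) * (exp (l*(G - P) - a * real t) * exp (- a) * exp (l * (A$i \<bullet> x - (\<Sum>k\<in>UNIV. p k * v j k))))" for i j
      unfolding E2_def by (simp add: exp_add[symmetric] algebra_simps)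
    then have "(\<Sum>i\<in>UNIV. p i * (\<Sum>j\<in>UNIV. q j * E2 i j))
       = real CARD('n) * (exp (l*(G - P) - a * real t) * exp (- a) * (\<Sum>i\<in>UNIV. p i * (\<Sum>j\<in>UNIV. q j * exp (l * (A$i \<bullet> x - (\<Sum>k\<in>UNIV. p k * v j k))))))"
      by (simp add: dd_cmult)
    also have "\<dots> \<le> real CARD('n) * (exp (l*(G - P) - a * real t) * exp (- a) * exp a)"
      using step_E2[OF eta nx A, of w] w unfolding q_def v_def l_def a_def aa_def p_def
      by (intro mult_left_mono) auto
    also have "\<dots> = real CARD('n) * exp (l*(G - P) - a * real t)" by (simp add: exp_minus field_simps)
    finally show ?thesis .
  qed
  have part3: "(\<Sum>i\<in>UNIV. p i * (\<Sum>j\<in>UNIV. q j * E3 i j)) \<le> real CARD('n) / 10 * ((Q + real T - real t) / real T)"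
  proof -
    define c1 where "c1 = real CARD('n) / 10 / real T"
    define C0 where "C0 = Q + real T - real (Suc t)"
    define D where "D j = (\<Sum>k\<in>UNIV. p k * (v j k)^2)" for j
    have c1: "0 \<le> c1" unfolding c1_def using T0 by simp
    have e3: "E3 i j = c1 * C0 + c1 * D j" for i j
      unfolding E3_def c1_def C0_def D_def using T0 by (simp add: field_simps)
    have "(\<Sum>i\<in>UNIV. p i * (\<Sum>j\<in>UNIV. q j * E3 i j))
        = c1 * C0 + c1 * (\<Sum>i\<in>UNIV. p i * (\<Sum>j\<in>UNIV. q j * D j))"
      by (simp only: e3 dd_add dd_cmult dd_const[OF p1 q1])
    also have "\<dots> \<le> c1 * C0 + c1 * 1"
      using step_E3[OF eta(1) nx A, of w] w c1 unfolding p_def q_def v_def D_def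
      by (intro add_left_mono mult_left_mono) auto
    also have "\<dots> = real CARD('n) / 10 * ((Q + real T - real t) / real T)"
      unfolding c1_def C0_def using T0 by (simp add: field_simps)
    finally show ?thesis .
  qed
  have "(\<Sum>i\<in>UNIV. pp w i * (\<Sum>j\<in>UNIV. pmf (col_dist (xof y)) j * Psi A \<eta> T (upd A \<eta> T ((y,w,s),t,V,P,Q,G) i j)))
      = (\<Sum>i\<in>UNIV. p i * (\<Sum>j\<in>UNIV. q j * ((\<Sum>k\<in>UNIV. E1 k i j) + E2 i j + E3 i j)))"
    unfolding eq p_def q_def x_def ..
  also have "\<dots> = (\<Sum>k\<in>UNIV. (\<Sum>i\<in>UNIV. p i * (\<Sum>j\<in>UNIV. q j * E1 k i j)))
       + (\<Sum>i\<in>UNIV. p i * (\<Sum>j\<in>UNIV. q j * E2 i j)) + (\<Sum>i\<in>UNIV. p i * (\<Sum>j\<in>UNIV. q j * E3 i j))"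
    by (simp only: dd_add dd_sumk)
  also have "\<dots> \<le> (\<Sum>k\<in>UNIV. exp (l*(V k - A$k \<bullet> s) - a * real t)) + real CARD('n) * exp (l*(G - P) - a * real t)
       + real CARD('n) / 10 * ((Q + real T - real t) / real T)"
    using part1 part2 part3 by (intro add_mono sum_mono) auto
  also have "\<dots> = Psi A \<eta> T ((y,w,s),t,V,P,Q,G)" unfolding Psi_def l_def a_def by simp
  finally show ?thesis .
qed

definition phi :: "real^'d::finite \<Rightarrow> real" where
  "phi y = (if norm y \<le> 1 then (norm y)\<^sup>2 / 2 else norm y - 1/2)"

lemma xof_cases: "xof y = (if norm y \<le> 1 then y else (1 / norm y) *\<^sub>R y)"
  unfolding xof_def by (auto simp: max_def)

lemma phi_lower:
  fixes y u :: "real^'d::finite"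
  assumes "norm u \<le> 1" shows "y \<bullet> u - (norm u)\<^sup>2 / 2 \<le> phi y"
proof -
  have "y \<bullet> u \<le> norm y * norm u" by (rule norm_cauchy_schwarz)
  moreover have "norm y * norm u - (norm u)\<^sup>2 / 2 \<le> phi y"
  proof (cases "norm y \<le> 1")
    case True
    have "0 \<le> (norm y - norm u)\<^sup>2" by simp
    then show ?thesis using True unfolding phi_def by (simp add: power2_diff field_simps)
  next
    case False
    have "norm y * norm u - (norm u)\<^sup>2 / 2 \<le> norm y - 1/2"
    proof -
      have "0 \<le> (1 - norm u) * (norm y - 1) + (1 - norm u)\<^sup>2 / 2"
        using False assms by (intro add_nonneg_nonneg mult_nonneg_nonneg) auto
      then show ?thesis by (simp add: power2_diff field_simps)
    qed
    then show ?thesis using False unfolding phi_def by simp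
  qed
  ultimately show ?thesis by linarith
qed

lemma phi_attain: "phi y = y \<bullet> xof y - (norm (xof y))\<^sup>2 / 2"
proof (cases "norm y \<le> 1")
  case True then show ?thesis unfolding phi_def xof_cases by (simp add: power2_norm_eq_inner)
next
  case False
  then have n: "norm y > 1" by simp
  have "y \<bullet> ((1 / norm y) *\<^sub>R y) = norm y" using n by (simp add: power2_norm_eq_inner[symmetric] power2_eq_square)
  have y0: "norm y \<noteq> 0" using n by linarith
  moreover have "norm ((1 / norm y) *\<^sub>R y) = 1" using y0 by (simp add: norm_scaleR)
  ultimately show ?thesis using False y0 unfolding phi_def xof_cases
    by (simp add: power2_norm_eq_inner[symmetric] power2_eq_square)
qed

lemma proj_vi:
  fixes a u :: "real^'d::finite"
  assumes "norm u \<le> 1" shows "(a - xof a) \<bullet> (u - xof a) \<le> 0"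
proof (cases "norm a \<le> 1")
  case True then show ?thesis unfolding xof_cases by simp
next
  case False
  then have n: "norm a > 1" by simp
  define e where "e = (1 / norm a) *\<^sub>R a"
  have a0: "a \<noteq> 0" proof assume "a = 0" then show False using n by simp qed
  have ne: "norm e = 1" unfolding e_def using a0 by (simp add: norm_scaleR)
  have ae1: "(norm a - 1) *\<^sub>R e = ((norm a - 1) / norm a) *\<^sub>R a" by (simp add: e_def)
  have ae2: "a - e = (1 - 1 / norm a) *\<^sub>R a" by (simp add: e_def scaleR_diff_left)
  have na0: "norm a \<noteq> 0" using n by linarith
  have ae3: "(norm a - 1) / norm a = 1 - 1 / norm a" using na0 by (simp add: diff_divide_distrib)
  have ae: "a - e = (norm a - 1) *\<^sub>R e" using ae1 ae2 ae3 by simp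
  have "e \<bullet> u \<le> 1" using norm_cauchy_schwarz[of e u] ne assms by simp
  then have "e \<bullet> (u - e) \<le> 0" using ne by (simp add: inner_diff_right power2_norm_eq_inner[symmetric])
  then have "(norm a - 1) * (e \<bullet> (u - e)) \<le> 0" using n by (simp add: mult_nonneg_nonpos)
  moreover have "(a - e) \<bullet> (u - e) = (norm a - 1) * (e \<bullet> (u - e))" unfolding ae by simp
  ultimately show ?thesis using False unfolding xof_cases e_def[symmetric] by simp
qed

lemma proj_nonexp:
  fixes a b :: "real^'d::finite"
  shows "norm (xof a - xof b) \<le> norm (a - b)"
proof -
  have 1: "(a - xof a) \<bullet> (xof b - xof a) \<le> 0" by (rule proj_vi[OF norm_xof])
  have 2: "(b - xof b) \<bullet> (xof a - xof b) \<le> 0" by (rule proj_vi[OF norm_xof])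
  have "(norm (xof a - xof b))\<^sup>2 \<le> (a - b) \<bullet> (xof a - xof b)"
    using 1 2 by (simp add: power2_norm_eq_inner algebra_simps inner_diff_left inner_diff_right inner_commute)
  also have "\<dots> \<le> norm (a - b) * norm (xof a - xof b)" by (rule norm_cauchy_schwarz)
  finally have "norm (xof a - xof b) * norm (xof a - xof b) \<le> norm (a - b) * norm (xof a - xof b)"
    by (simp add: power2_eq_square)
  then show ?thesis
    by (cases "norm (xof a - xof b) = 0") (auto simp: mult_le_cancel_right)
qed

lemma phi_step:
  fixes y h :: "real^'d::finite"
  shows "phi (y + h) \<le> phi y + h \<bullet> xof y + (norm h)\<^sup>2"
proof -
  have "y \<bullet> xof (y + h) - (norm (xof (y + h)))\<^sup>2 / 2 \<le> phi y" by (rule phi_lower[OF norm_xof])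
  then have "phi (y + h) \<le> phi y + h \<bullet> xof (y + h)"
    unfolding phi_attain[of "y + h"] by (simp add: inner_add_left)
  also have "h \<bullet> xof (y + h) = h \<bullet> xof y + h \<bullet> (xof (y + h) - xof y)" by (simp add: inner_diff_right)
  also have "h \<bullet> (xof (y + h) - xof y) \<le> norm h * norm (xof (y + h) - xof y)" by (rule norm_cauchy_schwarz)
  also have "\<dots> \<le> norm h * norm h" using proj_nonexp[of "y + h" y] by (intro mult_left_mono) auto
  finally show ?thesis by (simp add: power2_eq_square)
qed

definition Inv :: "real^'d::finite^'n::finite \<Rightarrow> real \<Rightarrow> nat \<Rightarrow> nat \<Rightarrow> ('d,'n) aug \<Rightarrow> bool" where
  "Inv A \<eta> T k z = (case z of ((y,w,s),t,V,P,Q,G) \<Rightarrow>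
     t = k \<and> (\<forall>i. 0 < w i) \<and> (\<Sum>i\<in>UNIV. w i) \<le> real CARD('n) * exp (-\<eta>*P + \<eta>^2*Q)
     \<and> (\<forall>i. exp (-\<eta> * V i) \<le> w i)
     \<and> phi y \<le> (1/sqrt(2*real T)) * G + (1/sqrt(2*real T))^2 * real k
     \<and> (\<forall>u m. (\<forall>i. m \<le> A$i \<bullet> u) \<longrightarrow> (1/sqrt(2*real T)) * real k * m \<le> y \<bullet> u)
     \<and> norm s \<le> real k \<and> 0 \<le> Q)"

lemma Inv_init: "Inv A \<eta> T 0 ((0, \<lambda>_. 1, 0), 0, \<lambda>_. 0, 0, 0, 0)"
  unfolding Inv_def phi_def by simp

lemma mw_factor_pos: "0 < 1 - (z::real) + z^2"
proof -
  have "1 - z + z^2 = (z - 1/2)^2 + 3/4" by (simp add: power2_eq_square algebra_simps)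
  then show ?thesis by (metis add_nonneg_pos zero_le_power2 zero_less_divide_iff zero_less_numeral)
qed

lemma Inv_step:
  fixes A :: "real^'d::finite^'n::finite"
  assumes eta: "0 < \<eta>" and A: "\<forall>k. norm (A $ k) \<le> 1" and I: "Inv A \<eta> T k z"
  shows "Inv A \<eta> T (Suc k) (upd A \<eta> T z i j)"
proof -
  obtain y w s t V P Q G where z: "z = ((y,w,s),t,V,P,Q,G)" by (metis prod.exhaust)
  define x where "x = xof y"
  have nx: "norm x \<le> 1" unfolding x_def by (rule norm_xof)
  define v where "v k = vv A \<eta> x j k" for k
  define f where "f k = 1 - \<eta> * v k + \<eta>^2 * (v k)^2" for k
  define e where "e = 1/sqrt(2*real T)"
  define W where "W = (\<Sum>i\<in>UNIV. w i)"
  define Pv where "Pv = (\<Sum>k\<in>UNIV. pp w k * v k)"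
  define Qv where "Qv = (\<Sum>k\<in>UNIV. pp w k * (v k)^2)"
  from I have t: "t = k" and w: "\<forall>i. 0 < w i" and WI: "W \<le> real CARD('n) * exp (-\<eta>*P + \<eta>^2*Q)"
    and wl: "\<forall>i. exp (-\<eta> * V i) \<le> w i" and ph: "phi y \<le> e * G + e^2 * real k"
    and yu: "\<forall>u m. (\<forall>i. m \<le> A$i \<bullet> u) \<longrightarrow> e * real k * m \<le> y \<bullet> u"
    and ns: "norm s \<le> real k" and Q: "0 \<le> Q"
    unfolding Inv_def z W_def e_def by auto
  have W0: "0 < W" unfolding W_def using w by (intro sum_pos) auto
  have ppw: "pp w k = w k / W" for k unfolding pp_def W_def using w
    by (metis (no_types, lifting) abs_of_pos sum.cong)
  have vabs: "\<bar>\<eta> * v k\<bar> \<le> 1" for k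
    using vv_abs[OF eta, of A x j k] eta unfolding v_def by (simp add: abs_mult field_simps)
  have fpos: "0 < f k" for k unfolding f_def using mw_factor_pos[of "\<eta> * v k"] by (simp add: power_mult_distrib)
  have upd_eq: "upd A \<eta> T z i j = ((y + e *\<^sub>R (A $ i), (\<lambda>k. w k * f k), s + x), Suc t, (\<lambda>k. V k + v k), P + Pv, Q + Qv, G + A $ i \<bullet> x)"
    unfolding z upd_def f_def v_def x_def e_def Pv_def Qv_def by simp
  have Qv0: "0 \<le> Qv" unfolding Qv_def using w by (intro sum_nonneg mult_nonneg_nonneg pp_nn) (auto simp: less_imp_le)
  have "(\<Sum>k\<in>UNIV. w k * f k) = W - \<eta> * (\<Sum>k\<in>UNIV. w k * v k) + \<eta>^2 * (\<Sum>k\<in>UNIV. w k * (v k)^2)"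
    unfolding f_def W_def by (simp add: algebra_simps sum.distrib sum_subtractf sum_distrib_left)
  also have "(\<Sum>k\<in>UNIV. w k * v k) = W * Pv" unfolding Pv_def ppw using W0
    by (simp add: sum_distrib_left field_simps)
  also have "(\<Sum>k\<in>UNIV. w k * (v k)^2) = W * Qv" unfolding Qv_def ppw using W0
    by (simp add: sum_distrib_left field_simps)
  also have "W - \<eta> * (W * Pv) + \<eta>^2 * (W * Qv) = W * (1 + (-\<eta> * Pv + \<eta>^2 * Qv))" by (simp add: algebra_simps)
  also have "\<dots> \<le> W * exp (-\<eta> * Pv + \<eta>^2 * Qv)" using W0 by (intro mult_left_mono exp_ge_add_one_self) auto
  also have "\<dots> \<le> real CARD('n) * exp (-\<eta>*P + \<eta>^2*Q) * exp (-\<eta> * Pv + \<eta>^2 * Qv)"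
    using WI by (intro mult_right_mono) auto
  also have "\<dots> = real CARD('n) * exp (-\<eta>*(P + Pv) + \<eta>^2*(Q + Qv))"
    by (simp add: exp_add[symmetric] algebra_simps)
  finally have Wn: "(\<Sum>k\<in>UNIV. w k * f k) \<le> real CARD('n) * exp (-\<eta>*(P + Pv) + \<eta>^2*(Q + Qv))" .
  have wl': "exp (-\<eta> * (V k + v k)) \<le> w k * f k" for k
  proof -
    have "exp (-\<eta> * (V k + v k)) = exp (-\<eta> * V k) * exp (- (\<eta> * v k))" by (simp add: exp_add[symmetric] algebra_simps)
    also have "\<dots> \<le> w k * f k"
      using wl w exp_neg_le_quad[OF vabs[of k]] by (intro mult_mono) (auto simp: f_def power_mult_distrib less_imp_le)
    finally show ?thesis .
  qed
  have ph': "phi (y + e *\<^sub>R A $ i) \<le> e * (G + A $ i \<bullet> x) + e^2 * real (Suc k)"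
  proof -
    have "phi (y + e *\<^sub>R A $ i) \<le> phi y + (e *\<^sub>R A $ i) \<bullet> xof y + (norm (e *\<^sub>R A $ i))^2" by (rule phi_step)
    also have "(norm (e *\<^sub>R A $ i))^2 \<le> e^2"
    proof -
      have "norm (e *\<^sub>R A $ i) \<le> \<bar>e\<bar> * 1" using A mult_left_mono[of "norm (A $ i)" 1 "\<bar>e\<bar>"] by simp
      then show ?thesis by (metis abs_le_square_iff abs_norm_cancel mult.right_neutral power2_abs)
    qed
    finally show ?thesis using ph unfolding x_def by (simp add: algebra_simps)
  qed
  have yu': "e * real (Suc k) * m \<le> (y + e *\<^sub>R A $ i) \<bullet> u" if "\<forall>i. m \<le> A$i \<bullet> u" for u m
  proof -
    have "e * real k * m \<le> y \<bullet> u" using yu that by blast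
    moreover have "e * m \<le> e * (A $ i \<bullet> u)" using that unfolding e_def by (intro mult_left_mono) auto
    ultimately show ?thesis by (simp add: inner_add_left algebra_simps)
  qed
  have ns': "norm (s + x) \<le> real (Suc k)" using ns nx norm_triangle_ineq[of s x] by simp
  show ?thesis unfolding upd_eq Inv_def
    using t w fpos Wn wl' ph' yu' ns' Q Qv0 unfolding e_def by (auto simp: algebra_simps)
qed

lemma final_arith:
  fixes \<eta> T L \<epsilon> V As G P Q m \<sigma> cA cB :: real
  assumes eta: "0 < \<eta>" and T: "0 < T" and eps: "0 < \<epsilon>"
    and h1: "7*\<eta>*(V - As) - (7*\<eta>*\<eta> + 100*(7*\<eta>)\<^sup>2) * T < cA"
    and h2: "7*\<eta>*(G - P) - (7*\<eta>*\<eta> + 100*(7*\<eta>)\<^sup>2) * T < cB"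
    and cA: "cA \<le> 31/10 * L" and cB: "cB \<le> 21/10 * L"
    and h3: "Q < 42 * T"
    and h4: "P - \<eta> * Q - L / \<eta> \<le> V"
    and h5: "T * m \<le> G + sqrt (2*T)"
    and n1: "\<eta> \<le> \<epsilon> / 20000" and n2: "2 * L / \<epsilon> \<le> \<eta> * T"
    and n3: "sqrt (2*T) \<le> \<epsilon> * T / 100" and n4: "\<sigma> - \<epsilon>/50 \<le> m"
  shows "T * (\<sigma> - \<epsilon>) \<le> As"
proof -
  have a: "(7*\<eta>*\<eta> + 100*(7*\<eta>)\<^sup>2) * T = 7*\<eta> * (701 * \<eta> * T)" by (simp add: power2_eq_square algebra_simps)
  have d1: "V - As < (31/10 * L) / (7*\<eta>) + 701 * \<eta> * T"
  proof -
    have "7*\<eta>*(V - As) < 31/10 * L + 7*\<eta> * (701 * \<eta> * T)" using h1 cA a by linarith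
    then have "7*\<eta>*(V - As - 701 * \<eta> * T) < 31/10 * L" by (simp add: algebra_simps)
    then have "V - As - 701 * \<eta> * T < (31/10 * L) / (7*\<eta>)" using eta by (simp add: pos_less_divide_eq mult.commute)
    then show ?thesis by linarith
  qed
  have d2: "G - P < (21/10 * L) / (7*\<eta>) + 701 * \<eta> * T"
  proof -
    have "7*\<eta>*(G - P) < 21/10 * L + 7*\<eta> * (701 * \<eta> * T)" using h2 cB a by linarith
    then have "7*\<eta>*(G - P - 701 * \<eta> * T) < 21/10 * L" by (simp add: algebra_simps)
    then have "G - P - 701 * \<eta> * T < (21/10 * L) / (7*\<eta>)" using eta by (simp add: pos_less_divide_eq mult.commute)
    then show ?thesis by linarith
  qed
  define B where "B = L / \<eta>"
  have e1: "(31/10 * L) / (7*\<eta>) = 31/70 * B" unfolding B_def by simp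
  have e2: "(21/10 * L) / (7*\<eta>) = 21/70 * B" unfolding B_def by simp
  have B: "B \<le> \<epsilon> * T / 2"
  proof -
    have "2 * L \<le> \<epsilon> * (\<eta> * T)" using n2 eps by (simp add: pos_divide_le_eq mult.commute)
    then have "L / \<eta> \<le> \<epsilon> * T / 2" using eta by (simp add: pos_divide_le_eq algebra_simps)
    then show ?thesis unfolding B_def .
  qed
  have eQ: "\<eta> * Q \<le> 42 * (\<eta> * T)" using h3 eta by (simp add: less_imp_le)
  have eT: "\<eta> * T \<le> \<epsilon> * T / 20000" using n1 T by (simp add: mult_right_mono divide_right_mono)
  have "As > V - 31/70 * B - 701 * \<eta> * T" using d1 e1 by linarith
  moreover have "V \<ge> P - \<eta> * Q - B" using h4 B_def by simp
  moreover have "P > G - 21/70 * B - 701 * \<eta> * T" using d2 e2 by linarith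
  ultimately have "As > T * m - sqrt (2*T) - (52/70 + 1) * B - 1402 * (\<eta> * T) - \<eta> * Q" using h5 by (simp add: algebra_simps)
  moreover have "(52 / 70 + 1) * B \<le> (122/70) * (\<epsilon> * T / 2)" using B by (simp add: algebra_simps)
  moreover have "1402 * (\<eta> * T) + \<eta> * Q \<le> 1444 * (\<epsilon> * T / 20000)" using eQ eT by (simp add: algebra_simps)
  ultimately have "As > T * m - \<epsilon> * T / 100 - (122/70) * (\<epsilon> * T / 2) - 1444 * (\<epsilon> * T / 20000)"
    using n3 by (simp add: algebra_simps)
  moreover have "T * m \<ge> T * (\<sigma> - \<epsilon>/50)" using n4 T by (simp add: mult_left_mono)
  ultimately have "As > T * (\<sigma> - \<epsilon>) + \<epsilon> * T * (1 - 1/100 - 61/70 - 1444/20000 - 1/50)"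
    by (simp add: algebra_simps)
  moreover have "0 \<le> \<epsilon> * T * (1 - 1/100 - 61/70 - 1444/20000 - 1/50)" using eps T by simp
  ultimately show ?thesis by linarith
qed

lemma perc_value_bdd:
  fixes A :: "real^'d::finite^'n::finite"
  assumes "\<forall>i. norm (A $ i) \<le> 1"
  shows "\<And>x. x \<in> cball 0 1 \<Longrightarrow> Min (range (\<lambda>i. A $ i \<bullet> x)) \<le> 1"
proof -
  fix x :: "real^'d" assume "x \<in> cball 0 1"
  then have "norm x \<le> 1" by simp
  obtain i :: 'n where True by simp
  have "Min (range (\<lambda>i. A $ i \<bullet> x)) \<le> A $ i \<bullet> x" by (rule Min_le) auto
  also have "\<dots> \<le> 1" using inner_row_abs[OF \<open>norm x \<le> 1\<close>, of A i] assms by simp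
  finally show "Min (range (\<lambda>i. A $ i \<bullet> x)) \<le> 1" .
qed

lemma perc_value_le1:
  fixes A :: "real^'d::finite^'n::finite"
  assumes "\<forall>i. norm (A $ i) \<le> 1"
  shows "perc_value A \<le> 1"
  unfolding perc_value_def using perc_value_bdd[OF assms]
  by (intro cSUP_least) auto

lemma perc_value_approx:
  fixes A :: "real^'d::finite^'n::finite"
  assumes "\<forall>i. norm (A $ i) \<le> 1" "0 < \<delta>"
  shows "\<exists>u. norm u \<le> 1 \<and> (\<forall>i. perc_value A - \<delta> \<le> A $ i \<bullet> u)"
proof -
  have bdd: "bdd_above ((\<lambda>x. Min (range (\<lambda>i. A $ i \<bullet> x))) ` cball 0 1)"
    using perc_value_bdd[OF assms(1)] by (intro bdd_aboveI[where M=1]) auto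
  have "perc_value A - \<delta> < perc_value A" using assms by simp
  then obtain u where u: "u \<in> cball 0 1" "perc_value A - \<delta> < Min (range (\<lambda>i. A $ i \<bullet> u))"
    unfolding perc_value_def[of A] using less_cSUP_iff[OF _ bdd] by (auto simp: perc_value_def)
  have "\<forall>i. perc_value A - \<delta> \<le> A $ i \<bullet> u"
  proof
    fix i
    have "Min (range (\<lambda>i. A $ i \<bullet> u)) \<le> A $ i \<bullet> u" by (rule Min_le) auto
    then show "perc_value A - \<delta> \<le> A $ i \<bullet> u" using u by (simp add: less_imp_le)
  qed
  then show ?thesis using u by auto
qed

lemma ln42: "ln (42/10::real) \<le> 21/10 * ln 2"
proof -
  have "10 * ln (42/10::real) = ln ((42/10)^10)" by (simp add: ln_realpow)
  also have "\<dots> \<le> ln ((2::real)^21)" by (subst ln_le_cancel_iff) (auto simp: power_divide)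
  also have "\<dots> = 21 * ln 2" by (metis ln_realpow of_nat_numeral)
  finally show ?thesis by simp
qed

lemma ln2_half: "1/2 \<le> ln (2::real)"
proof -
  have "1/2 \<le> ln (2::real) \<longleftrightarrow> exp (1/2) \<le> (2::real)" by (rule ln_ge_iff) simp
  then show ?thesis using exp_half_le2 by blast
qed

lemma params:
  fixes \<epsilon> :: real and n :: nat
  assumes eps: "0 < \<epsilon>" and n: "2 \<le> n"
  shows "0 < real (perc_T \<epsilon> n)" "1/2 \<le> ln (real n)" "0 < perc_eta \<epsilon> n"
    "perc_eta \<epsilon> n \<le> \<epsilon>/20000" "2 * ln (real n) / \<epsilon> \<le> perc_eta \<epsilon> n * real (perc_T \<epsilon> n)"
    "sqrt (2 * real (perc_T \<epsilon> n)) \<le> \<epsilon> * real (perc_T \<epsilon> n) / 100"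
proof -
  define Tr where "Tr = real (perc_T \<epsilon> n)"
  define L where "L = ln (real n)"
  have L2: "ln 2 \<le> L" unfolding L_def using n by (subst ln_le_cancel_iff) auto
  then show L: "1/2 \<le> ln (real n)" using ln2_half unfolding L_def by linarith
  have Lp: "0 < L" using L unfolding L_def by linarith
  have pw: "\<epsilon> powr (-2) = 1 / \<epsilon>^2" using eps by (simp add: powr_minus divide_inverse)
  have "200^2 * \<epsilon> powr (-2) * L \<le> Tr" unfolding Tr_def perc_T_def L_def by (rule real_nat_ceiling_ge)
  then have "40000 * L / \<epsilon>^2 \<le> Tr" using pw by simp
  then have eT: "40000 * L \<le> \<epsilon>^2 * Tr" using eps by (simp add: pos_divide_le_eq mult.commute)
  have Tp: "0 < Tr"
  proof -
    have "0 < \<epsilon>^2 * Tr" using eT Lp by linarith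
    then show ?thesis using eps by (simp add: zero_less_mult_iff)
  qed
  then show "0 < real (perc_T \<epsilon> n)" unfolding Tr_def .
  have eta: "perc_eta \<epsilon> n = (1/100) * sqrt (L / Tr)" unfolding perc_eta_def L_def Tr_def ..
  show "0 < perc_eta \<epsilon> n" unfolding eta using Lp Tp by simp
  have "L / Tr \<le> (\<epsilon>/200)^2" using eT Tp by (simp add: divide_le_eq power_divide field_simps)
  then have "sqrt (L / Tr) \<le> \<epsilon>/200" using eps by (intro real_le_lsqrt) auto
  then show "perc_eta \<epsilon> n \<le> \<epsilon>/20000" unfolding eta by simp
  have sq: "sqrt (L / Tr) * Tr = sqrt (L * Tr)"
  proof -
    have "sqrt (L / Tr) * Tr = sqrt (L / Tr) * sqrt (Tr^2)" using Tp by simp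
    also have "\<dots> = sqrt (L / Tr * Tr^2)" by (rule real_sqrt_mult[symmetric])
    also have "L / Tr * Tr^2 = L * Tr" using Tp by (simp add: power2_eq_square)
    finally show ?thesis .
  qed
  have "(200 * L / \<epsilon>)^2 \<le> L * Tr"
  proof -
    have "(200 * L / \<epsilon>)^2 = L * (40000 * L) / \<epsilon>^2" by (simp add: power2_eq_square power_divide)
    also have "\<dots> \<le> L * (\<epsilon>^2 * Tr) / \<epsilon>^2" using eT Lp eps by (intro divide_right_mono mult_left_mono) auto
    also have "\<dots> = L * Tr" using eps by simp
    finally show ?thesis .
  qed
  then have "200 * L / \<epsilon> \<le> sqrt (L * Tr)" by (rule real_le_rsqrt)
  then show "2 * ln (real n) / \<epsilon> \<le> perc_eta \<epsilon> n * real (perc_T \<epsilon> n)"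
    unfolding eta Tr_def[symmetric] L_def[symmetric] using sq by (simp add: field_simps)
  have "2 * Tr \<le> (\<epsilon> * Tr / 100)^2"
  proof -
    have "20000 \<le> \<epsilon>^2 * Tr" using eT L unfolding L_def by linarith
    then have "20000 * Tr \<le> \<epsilon>^2 * Tr * Tr" using Tp by (intro mult_right_mono) auto
    then show ?thesis by (simp add: power2_eq_square field_simps)
  qed
  then have "sqrt (2 * Tr) \<le> \<epsilon> * Tr / 100" using eps Tp by (intro real_le_lsqrt) auto
  then show "sqrt (2 * real (perc_T \<epsilon> n)) \<le> \<epsilon> * real (perc_T \<epsilon> n) / 100" unfolding Tr_def .
qed

lemma ennreal_dsum:
  fixes a :: "'a \<Rightarrow> real" and b :: "'b \<Rightarrow> real"
  assumes "\<And>i. 0 \<le> a i" "\<And>j. 0 \<le> b j" "\<And>i j. 0 \<le> c i j"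
  shows "(\<Sum>i\<in>I. ennreal (a i) * (\<Sum>j\<in>J. ennreal (b j) * ennreal (c i j)))
       = ennreal (\<Sum>i\<in>I. a i * (\<Sum>j\<in>J. b j * c i j))"
proof -
  have 1: "\<And>i. (\<Sum>j\<in>J. ennreal (b j) * ennreal (c i j)) = ennreal (\<Sum>j\<in>J. b j * c i j)"
    using assms by (simp add: ennreal_mult[symmetric] mult_nonneg_nonneg)
  have 2: "\<And>i. 0 \<le> (\<Sum>j\<in>J. b j * c i j)" using assms by (intro sum_nonneg mult_nonneg_nonneg) auto
  show ?thesis unfolding 1 using assms 2
    by (simp add: ennreal_mult[symmetric] mult_nonneg_nonneg)
qed

lemma Psi_nonneg:
  assumes "Inv A \<eta> T k z" "k \<le> T" "0 < T"
  shows "0 \<le> Psi A \<eta> T z"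
proof -
  obtain y w s t V P Q G where z: "z = ((y,w,s),t,V,P,Q,G)" by (metis prod.exhaust)
  have "t = k" "0 \<le> Q" using assms(1) unfolding z Inv_def by auto
  then have "0 \<le> (Q + real T - real t) / real T" using assms by simp
  then show ?thesis unfolding z Psi_def prod.case
    by (intro add_nonneg_nonneg sum_nonneg mult_nonneg_nonneg) auto
qed

lemma Psi_init: "0 < T \<Longrightarrow> Psi (A::real^'d::finite^'n::finite) \<eta> T ((0, \<lambda>_. 1, 0), 0, \<lambda>_. 0, 0, 0, 0) = 21/10 * real CARD('n)"
  unfolding Psi_def by simp

lemma super_step:
  fixes A :: "real^'d::finite^'n::finite"
  assumes eta: "0 < \<eta>" "\<eta> \<le> 1/70" and A: "\<forall>k. norm (A $ k) \<le> 1"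
    and I: "Inv A \<eta> T k z" and k: "k < T"
  shows "(\<integral>\<^sup>+z'. ennreal (Psi A \<eta> T z') \<partial>aug_step A \<eta> T z) \<le> ennreal (Psi A \<eta> T z)"
proof -
  obtain y w s t V P Q G where z: "z = ((y,w,s),t,V,P,Q,G)" by (metis prod.exhaust)
  have t: "t = k" and w: "\<forall>i. 0 < w i" and Q: "0 \<le> Q" using I unfolding z Inv_def by auto
  have nn: "0 \<le> Psi A \<eta> T (upd A \<eta> T z i j)" for i j
    using Psi_nonneg[OF Inv_step[OF eta(1) A I, of i j], of ] k by simp
  have "(\<integral>\<^sup>+z'. ennreal (Psi A \<eta> T z') \<partial>aug_step A \<eta> T z)
     = (\<Sum>i\<in>UNIV. ennreal (pmf (row_dist w) i) *
        (\<Sum>j\<in>UNIV. ennreal (pmf (col_dist (xof y)) j) * ennreal (Psi A \<eta> T (upd A \<eta> T z i j))))"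
    by (simp add: nn_aug_step z)
  also have "\<dots> = ennreal (\<Sum>i\<in>UNIV. pmf (row_dist w) i *
        (\<Sum>j\<in>UNIV. pmf (col_dist (xof y)) j * Psi A \<eta> T (upd A \<eta> T z i j)))"
    by (rule ennreal_dsum) (use nn in auto)
  also have "(\<Sum>i\<in>UNIV. pmf (row_dist w) i *
        (\<Sum>j\<in>UNIV. pmf (col_dist (xof y)) j * Psi A \<eta> T (upd A \<eta> T z i j)))
      = (\<Sum>i\<in>UNIV. pp w i * (\<Sum>j\<in>UNIV. pmf (col_dist (xof y)) j * Psi A \<eta> T (upd A \<eta> T ((y,w,s),t,V,P,Q,G) i j)))"
    using pp_row[of w] w unfolding z by auto
  also have "\<dots> \<le> Psi A \<eta> T ((y,w,s),t,V,P,Q,G)"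
    by (rule Psi_step[OF eta A w]) (use k t Q in auto)
  finally show ?thesis unfolding z by (simp add: ennreal_leI)
qed

lemma pmf_markov:
  fixes M :: "'a pmf" and F :: "'a \<Rightarrow> real"
  assumes "(\<integral>\<^sup>+z. ennreal (F z) \<partial>M) \<le> ennreal B" "0 < c" "0 \<le> B"
  shows "measure_pmf.prob M {z. c \<le> F z} \<le> B / c"
proof -
  have "ennreal c * emeasure M {z. c \<le> F z} = (\<integral>\<^sup>+z. ennreal c * indicator {z. c \<le> F z} z \<partial>M)"
    by (simp add: nn_integral_cmult_indicator)
  also have "\<dots> \<le> (\<integral>\<^sup>+z. ennreal (F z) \<partial>M)"
    by (intro nn_integral_mono) (auto split: split_indicator intro: ennreal_leI)
  also have "\<dots> \<le> ennreal B" by (rule assms(1))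
  finally have "ennreal (c * measure_pmf.prob M {z. c \<le> F z}) \<le> ennreal B"
    using assms(2) by (simp add: measure_pmf.emeasure_eq_measure ennreal_mult)
  then have "c * measure_pmf.prob M {z. c \<le> F z} \<le> B" using assms(3) by simp
  then show ?thesis using assms(2) by (simp add: pos_le_divide_eq mult.commute)
qed

lemma det_good:
  fixes A :: "real^'d::finite^'n::finite" and \<epsilon> :: real
  assumes eps: "0 < \<epsilon>" "\<epsilon> < 2" and n: "2 \<le> CARD('n)" and A: "\<forall>i. norm (A $ i) \<le> 1"
    and I: "Inv A (perc_eta \<epsilon> CARD('n)) (perc_T \<epsilon> CARD('n)) (perc_T \<epsilon> CARD('n)) z"
    and Ps: "Psi A (perc_eta \<epsilon> CARD('n)) (perc_T \<epsilon> CARD('n)) z < 42/10 * real CARD('n)"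
  shows "eps_approx_solution \<epsilon> A ((1 / real (perc_T \<epsilon> CARD('n))) *\<^sub>R snd (snd (fst z)))"
proof -
  obtain y w s t V P Q G where z: "z = ((y,w,s),t,V,P,Q,G)" by (metis prod.exhaust)
  define T where "T = perc_T \<epsilon> CARD('n)"
  define \<eta> where "\<eta> = perc_eta \<epsilon> CARD('n)"
  define L where "L = ln (real CARD('n))"
  define Tr where "Tr = real T"
  define nn where "nn = real CARD('n)"
  note pr = params[OF eps(1) n, folded T_def \<eta>_def L_def, folded Tr_def]
  have Tp: "0 < Tr" and L: "1/2 \<le> L" and etap: "0 < \<eta>" and n1: "\<eta> \<le> \<epsilon>/20000"
    and n2: "2 * L / \<epsilon> \<le> \<eta> * Tr" and n3: "sqrt (2 * Tr) \<le> \<epsilon> * Tr / 100" using pr by auto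
  have nnp: "0 < nn" unfolding nn_def by simp
  have Ln: "L = ln nn" unfolding L_def nn_def ..
  define e where "e = 1/sqrt(2*Tr)"
  from I have t: "t = T" and w: "\<forall>i. 0 < w i" and WI: "(\<Sum>i\<in>UNIV. w i) \<le> nn * exp (-\<eta>*P + \<eta>^2*Q)"
    and wl: "\<forall>i. exp (-\<eta> * V i) \<le> w i" and ph: "phi y \<le> e * G + e^2 * Tr"
    and yu: "\<forall>u m. (\<forall>i. m \<le> A$i \<bullet> u) \<longrightarrow> e * Tr * m \<le> y \<bullet> u"
    and ns: "norm s \<le> Tr" and Q: "0 \<le> Q"
    unfolding Inv_def z T_def[symmetric] \<eta>_def[symmetric] e_def Tr_def nn_def by auto
  define a where "a = 7*\<eta>*\<eta> + 100*(7*\<eta>)\<^sup>2"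
  have Psi_eq: "Psi A \<eta> T z = (\<Sum>k\<in>UNIV. exp (7*\<eta>*(V k - A$k \<bullet> s) - a * Tr))
       + nn * exp (7*\<eta>*(G - P) - a * Tr) + nn / 10 * (Q / Tr)"
    unfolding Psi_def z a_def aa_def t Tr_def nn_def by simp
  have Ps': "(\<Sum>k\<in>UNIV. exp (7*\<eta>*(V k - A$k \<bullet> s) - a * Tr)) + nn * exp (7*\<eta>*(G - P) - a * Tr) + nn / 10 * (Q / Tr) < 42/10 * nn"
    using Ps Psi_eq unfolding T_def \<eta>_def nn_def by simp
  have nn0: "0 \<le> nn / 10 * (Q / Tr)" using Q Tp nnp by simp
  have s0: "0 \<le> (\<Sum>k\<in>UNIV. exp (7*\<eta>*(V k - A$k \<bullet> s) - a * Tr))" by (intro sum_nonneg) auto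
  have e0: "0 \<le> nn * exp (7*\<eta>*(G - P) - a * Tr)" using nnp by simp
  have l42: "ln (42/10) \<le> 21/10 * L" using ln42 L_def n
  proof -
    have "ln 2 \<le> L" unfolding L_def using n by (subst ln_le_cancel_iff) auto
    then show ?thesis using ln42 by linarith
  qed
  have Q42: "Q < 42 * Tr"
  proof -
    have "nn / 10 * (Q / Tr) < 42/10 * nn" using Ps' s0 e0 by linarith
    then have "Q * nn < (42 * Tr) * nn" using nnp Tp by (simp add: field_simps)
    then show ?thesis using nnp by (simp add: mult_less_cancel_right_pos)
  qed
  have h2: "7*\<eta>*(G - P) - a * Tr < ln (42/10)"
  proof -
    have "nn * exp (7*\<eta>*(G - P) - a * Tr) < 42/10 * nn" using Ps' s0 nn0 by linarith
    then have "exp (7*\<eta>*(G - P) - a * Tr) < 42/10" using nnp by (simp add: mult.commute)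
    then show ?thesis by (metis exp_less_cancel_iff exp_ln zero_less_divide_iff zero_less_numeral)
  qed
  obtain u where u: "norm u \<le> 1" "\<forall>i. perc_value A - \<epsilon>/50 \<le> A $ i \<bullet> u"
    using perc_value_approx[OF A, of "\<epsilon>/50"] eps by auto
  define m where "m = perc_value A - \<epsilon>/50"
  have h5: "Tr * m \<le> G + sqrt (2*Tr)"
  proof -
    define r where "r = sqrt (2*Tr)"
    have r0: "0 < r" unfolding r_def using Tp by simp
    have r2: "r^2 = 2 * Tr" unfolding r_def using Tp by simp
    have er: "e * r = 1" unfolding e_def r_def using Tp by simp
    have "e * Tr * m \<le> y \<bullet> u" using yu u unfolding m_def by blast
    also have "y \<bullet> u \<le> phi y + (norm u)\<^sup>2 / 2" using phi_lower[OF u(1), of y] by simp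
    also have "(norm u)\<^sup>2 \<le> 1" using u(1) by (simp add: power_le_one)
    finally have "e * Tr * m \<le> phi y + 1/2" by simp
    then have "e * Tr * m \<le> e * G + e^2 * Tr + 1/2" using ph by simp
    then have "r * (e * Tr * m) \<le> r * (e * G + e^2 * Tr + 1/2)" using r0 by (intro mult_left_mono) auto
    moreover have "r * (e * Tr * m) = (e * r) * Tr * m" by (simp add: mult_ac)
    moreover have "r * (e * G + e^2 * Tr + 1/2) = (e * r) * G + (e * r) * e * Tr + r / 2"
      by (simp add: algebra_simps power2_eq_square)
    ultimately have "Tr * m \<le> G + e * Tr + r / 2" using er by simp
    moreover have "e * Tr = r / 2"
    proof -
      have "e * Tr = e * (r^2 / 2)" using r2 by simp
      also have "\<dots> = (e * r) * r / 2" by (simp add: power2_eq_square)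
      finally show ?thesis using er by simp
    qed
    ultimately show ?thesis unfolding r_def by simp
  qed
  have W_ge: "w i \<le> (\<Sum>i\<in>UNIV. w i)" for i
    using w by (intro member_le_sum) (auto simp: less_imp_le)
  have goal_i: "Tr * (perc_value A - \<epsilon>) \<le> A $ i \<bullet> s" for i
  proof (rule final_arith[where \<eta> = \<eta> and V = "V i" and G = G and P = P and Q = Q and m = m and L = L
        and cA = "ln (42/10 * nn)" and cB = "ln (42/10)" and T = Tr and As = "A $ i \<bullet> s"
        and \<sigma> = "perc_value A" and \<epsilon> = \<epsilon>])
    show "0 < \<eta>" "0 < Tr" "0 < \<epsilon>" by (fact etap, fact Tp, fact eps(1))
    have "exp (7*\<eta>*(V i - A$i \<bullet> s) - a * Tr) \<le> (\<Sum>k\<in>UNIV. exp (7*\<eta>*(V k - A$k \<bullet> s) - a * Tr))"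
      by (intro member_le_sum) auto
    then have "exp (7*\<eta>*(V i - A$i \<bullet> s) - a * Tr) < 42/10 * nn" using Ps' e0 nn0 by linarith
    then show "7*\<eta>*(V i - A$i \<bullet> s) - (7*\<eta>*\<eta> + 100*(7*\<eta>)\<^sup>2) * Tr < ln (42/10 * nn)"
      unfolding a_def[symmetric] using nnp by (metis exp_less_cancel_iff exp_ln mult_pos_pos zero_less_divide_iff zero_less_numeral)
    show "7*\<eta>*(G - P) - (7*\<eta>*\<eta> + 100*(7*\<eta>)\<^sup>2) * Tr < ln (42/10)" using h2 unfolding a_def .
    have "ln (42/10 * nn) = ln (42/10) + ln nn" using nnp ln_mult[of "42/10" nn] by simp
    then show "ln (42/10 * nn) \<le> 31/10 * L" using l42 Ln by linarith
    show "ln (42/10) \<le> 21/10 * L" by (rule l42)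
    show "Q < 42 * Tr" by (rule Q42)
    show "P - \<eta> * Q - L / \<eta> \<le> V i"
    proof -
      have "exp (-\<eta> * V i) \<le> nn * exp (-\<eta>*P + \<eta>^2*Q)" using wl W_ge[of i] WI by (meson order_trans)
      also have "\<dots> = exp (L + (-\<eta>*P + \<eta>^2*Q))" using nnp Ln by (simp add: exp_add)
      finally have "-\<eta> * V i \<le> L - \<eta>*P + \<eta>^2*Q" by simp
      then have "\<eta> * (P - \<eta> * Q - V i) \<le> L" by (simp add: algebra_simps power2_eq_square)
      then have "P - \<eta> * Q - V i \<le> L / \<eta>" using etap by (simp add: pos_le_divide_eq mult.commute)
      then show ?thesis by linarith
    qed
    show "Tr * m \<le> G + sqrt (2*Tr)" by (rule h5)
    show "\<eta> \<le> \<epsilon>/20000" "2 * L / \<epsilon> \<le> \<eta> * Tr" "sqrt (2*Tr) \<le> \<epsilon> * Tr / 100" by (fact n1, fact n2, fact n3)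
    show "perc_value A - \<epsilon>/50 \<le> m" unfolding m_def by simp
  qed
  show ?thesis unfolding eps_approx_solution_def z T_def[symmetric] Tr_def[symmetric]
  proof
    show "(1 / Tr) *\<^sub>R snd (snd (fst ((y, w, s), t, V, P, Q, G))) \<in> cball 0 1"
      using ns Tp by (simp add: field_simps)
    show "\<forall>i. perc_value A - \<epsilon> \<le> A $ i \<bullet> (1 / Tr) *\<^sub>R snd (snd (fst ((y, w, s), t, V, P, Q, G)))"
    proof
      fix i
      have "perc_value A - \<epsilon> \<le> (A $ i \<bullet> s) / Tr" using goal_i[of i] Tp by (simp add: pos_le_divide_eq mult.commute)
      then show "perc_value A - \<epsilon> \<le> A $ i \<bullet> (1 / Tr) *\<^sub>R snd (snd (fst ((y, w, s), t, V, P, Q, G)))" by simp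
    qed
  qed
qed

lemma det_good_big:
  fixes A :: "real^'d::finite^'n::finite" and \<epsilon> :: real
  assumes eps: "2 \<le> \<epsilon>" and A: "\<forall>i. norm (A $ i) \<le> 1" and T: "0 < T"
    and I: "Inv A \<eta> T T z"
  shows "eps_approx_solution \<epsilon> A ((1 / real T) *\<^sub>R snd (snd (fst z)))"
proof -
  obtain y w s t V P Q G where z: "z = ((y,w,s),t,V,P,Q,G)" by (metis prod.exhaust)
  have ns: "norm s \<le> real T" using I unfolding z Inv_def by auto
  define x where "x = (1 / real T) *\<^sub>R s"
  have nx: "norm x \<le> 1" unfolding x_def using ns T by (simp add: field_simps)
  have "\<forall>i. perc_value A - \<epsilon> \<le> A $ i \<bullet> x"
  proof
    fix i
    have "\<bar>A $ i \<bullet> x\<bar> \<le> 1" using inner_row_abs[OF nx] A by blast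
    moreover have "perc_value A \<le> 1" using perc_value_le1[OF A] .
    ultimately show "perc_value A - \<epsilon> \<le> A $ i \<bullet> x" using eps by linarith
  qed
  then show ?thesis using nx unfolding eps_approx_solution_def z x_def by simp
qed

theorem mainTheorem2:
  fixes A :: "real^'d::finite^'n::finite" and \<epsilon> :: real
  assumes "\<epsilon> > 0"
    and "CARD('n) \<ge> 2"
    and "\<forall>i. norm (A $ i) \<le> 1"
  shows "measure_pmf.prob (sublinear_perceptron \<epsilon> A) {x. eps_approx_solution \<epsilon> A x} \<ge> 1/2"
proof -
  note eps = assms(1) and n = assms(2) and A = assms(3)
  define T where "T = perc_T \<epsilon> CARD('n)"
  define \<eta> where "\<eta> = perc_eta \<epsilon> CARD('n)"
  note pr = params[OF eps n, folded T_def \<eta>_def]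
  have T0: "0 < T" using pr(1) by simp
  have etap: "0 < \<eta>" using pr(3) .
  define z0 :: "('d,'n) aug" where "z0 = ((0, \<lambda>_. 1, 0), 0, \<lambda>_. 0, 0, 0, 0)"
  define M where "M = ((\<lambda>p. bind_pmf p (aug_step A \<eta> T)) ^^ T) (return_pmf z0)"
  define out :: "('d,'n) aug \<Rightarrow> real^'d" where "out z = (1 / real T) *\<^sub>R snd (snd (fst z))" for z
  define S where "S = {x. eps_approx_solution \<epsilon> A x}"
  have rel: "sublinear_perceptron \<epsilon> A = map_pmf out M"
  proof -
    have "map_pmf fst M = ((\<lambda>p. bind_pmf p (perc_step A \<eta> T)) ^^ T) (map_pmf fst (return_pmf z0))"
      unfolding M_def by (rule chain_map) (rule aug_map)
    also have "map_pmf fst (return_pmf z0) = return_pmf (0, \<lambda>_. 1, 0)" unfolding z0_def by simp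
    finally have "map_pmf fst M = ((\<lambda>p. bind_pmf p (perc_step A \<eta> T)) ^^ T) (return_pmf (0, \<lambda>_. 1, 0))" .
    moreover have "map_pmf out M = map_pmf (\<lambda>st. (1 / real T) *\<^sub>R snd (snd st)) (map_pmf fst M)"
      unfolding out_def by (simp add: map_pmf_comp)
    ultimately have "map_pmf out M = map_pmf (\<lambda>st. (1 / real T) *\<^sub>R snd (snd st)) (((\<lambda>p. bind_pmf p (perc_step A \<eta> T)) ^^ T) (return_pmf (0, \<lambda>_. 1, 0)))"
      by simp
    then show ?thesis unfolding sublinear_perceptron_def Let_def T_def \<eta>_def by simp
  qed
  have stepI: "Inv A \<eta> T (Suc k) z'" if k: "k < T" and Ik: "Inv A \<eta> T k z" and mem: "z' \<in> set_pmf (aug_step A \<eta> T z)" for k z z'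
  proof -
    obtain i j where "z' = upd A \<eta> T z i j" using set_aug_step[OF mem] by blast
    then show ?thesis using Inv_step[OF etap A Ik] by simp
  qed
  have init: "Inv A \<eta> T 0 z" if "z \<in> set_pmf (return_pmf z0)" for z
    using that Inv_init unfolding z0_def by simp
  have inv: "Inv A \<eta> T T z" if zM: "z \<in> set_pmf M" for z
  proof (rule chain_inv[where I = "Inv A \<eta> T" and N = T and pI = "return_pmf z0" and K = "aug_step A \<eta> T"])
    show "\<And>z. z \<in> set_pmf (return_pmf z0) \<Longrightarrow> Inv A \<eta> T 0 z" by (rule init)
    show "\<And>k z z'. k < T \<Longrightarrow> Inv A \<eta> T k z \<Longrightarrow> z' \<in> set_pmf (aug_step A \<eta> T z) \<Longrightarrow> Inv A \<eta> T (Suc k) z'"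
      by (rule stepI)
    show "T \<le> T" by simp
    show "z \<in> set_pmf (((\<lambda>p. bind_pmf p (aug_step A \<eta> T)) ^^ T) (return_pmf z0))" using zM unfolding M_def .
  qed
  have prob_eq: "measure_pmf.prob (sublinear_perceptron \<epsilon> A) S = measure_pmf.prob M (out -` S)"
    unfolding rel by simp
  show ?thesis
  proof (cases "2 \<le> \<epsilon>")
    case True
    have sub: "set_pmf M \<subseteq> out -` S"
    proof
      fix z assume "z \<in> set_pmf M"
      then have "Inv A \<eta> T T z" by (rule inv)
      then show "z \<in> out -` S" using det_good_big[OF True A T0] unfolding S_def out_def by simp
    qed
    have "measure_pmf.prob M (out -` S) = measure_pmf.prob M ((out -` S) \<inter> set_pmf M)"
      by (rule measure_Int_set_pmf[symmetric])
    also have "(out -` S) \<inter> set_pmf M = UNIV \<inter> set_pmf M" using sub by auto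
    also have "measure_pmf.prob M (UNIV \<inter> set_pmf M) = 1"
      using measure_Int_set_pmf[of M UNIV] by simp
    finally show ?thesis using prob_eq unfolding S_def by simp
  next
    case False
    then have eps2: "\<epsilon> < 2" by simp
    have eta70: "\<eta> \<le> 1/70" using pr(4) eps2 by simp
    define c where "c = 42/10 * real CARD('n)"
    have c0: "0 < c" unfolding c_def by simp
    have int: "(\<integral>\<^sup>+z. ennreal (Psi A \<eta> T z) \<partial>M) \<le> ennreal (21/10 * real CARD('n))"
    proof -
      have "(\<integral>\<^sup>+z. ennreal (Psi A \<eta> T z) \<partial>M) \<le> (\<integral>\<^sup>+z. ennreal (Psi A \<eta> T z) \<partial>return_pmf z0)"
        unfolding M_def
      proof (rule chain_super[where I = "Inv A \<eta> T" and N = T and pI = "return_pmf z0" and K = "aug_step A \<eta> T"])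
        show "\<And>z. z \<in> set_pmf (return_pmf z0) \<Longrightarrow> Inv A \<eta> T 0 z" by (rule init)
        show "\<And>k z z'. k < T \<Longrightarrow> Inv A \<eta> T k z \<Longrightarrow> z' \<in> set_pmf (aug_step A \<eta> T z) \<Longrightarrow> Inv A \<eta> T (Suc k) z'"
          by (rule stepI)
        show "\<And>k z. k < T \<Longrightarrow> Inv A \<eta> T k z \<Longrightarrow> (\<integral>\<^sup>+z'. ennreal (Psi A \<eta> T z') \<partial>aug_step A \<eta> T z) \<le> ennreal (Psi A \<eta> T z)"
          by (rule super_step[OF etap eta70 A])
        show "T \<le> T" by simp
      qed
      also have "\<dots> = ennreal (21/10 * real CARD('n))" using Psi_init[OF T0, of A \<eta>] by (simp add: z0_def)
      finally show ?thesis .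
    qed
    have mk: "measure_pmf.prob M {z. c \<le> Psi A \<eta> T z} \<le> (21/10 * real CARD('n)) / c"
      by (rule pmf_markov[OF int c0]) simp
    also have "\<dots> = 1/2" unfolding c_def by simp
    finally have mk: "measure_pmf.prob M {z. c \<le> Psi A \<eta> T z} \<le> 1/2" .
    have sub: "{z. Psi A \<eta> T z < c} \<inter> set_pmf M \<subseteq> (out -` S) \<inter> set_pmf M"
    proof
      fix z assume z: "z \<in> {z. Psi A \<eta> T z < c} \<inter> set_pmf M"
      then have "eps_approx_solution \<epsilon> A (out z)"
        using det_good[OF eps eps2 n A, of z] inv[of z] unfolding out_def T_def \<eta>_def c_def by auto
      then show "z \<in> (out -` S) \<inter> set_pmf M" using z unfolding S_def by auto
    qed
    have "measure_pmf.prob M {z. Psi A \<eta> T z < c} = measure_pmf.prob M ({z. Psi A \<eta> T z < c} \<inter> set_pmf M)"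
      by (rule measure_Int_set_pmf[symmetric])
    also have "\<dots> \<le> measure_pmf.prob M ((out -` S) \<inter> set_pmf M)"
      using sub by (intro measure_pmf.finite_measure_mono) auto
    also have "\<dots> = measure_pmf.prob M (out -` S)" by (rule measure_Int_set_pmf)
    finally have ge: "measure_pmf.prob M {z. Psi A \<eta> T z < c} \<le> measure_pmf.prob M (out -` S)" .
    have "measure_pmf.prob M {z. Psi A \<eta> T z < c} = 1 - measure_pmf.prob M {z. c \<le> Psi A \<eta> T z}"
    proof -
      have "{z. Psi A \<eta> T z < c} = space (measure_pmf M) - {z. c \<le> Psi A \<eta> T z}" by auto
      then show ?thesis using measure_pmf.prob_compl[of "{z. c \<le> Psi A \<eta> T z}" M] by simp
    qed
    then show ?thesis using ge mk prob_eq unfolding S_def by linarith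
  qed
qed

end
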